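(* Let $\mu>0$, $q\in[0,1]$, $s>0$ be fixed and for each $N$ consider the Moran model $(P,X)$ with $N$ individuals described in the context. For each $N$ let $A^{(N)}\subset\bar S^{(N)}$, and let $B^{(N)}$ be an event in $\mathscr{F}_1$ such that $\mathbb{P}^p(B^{(N)})\le\varepsilon(N)$ for all $p\in A^{(N)}$, where $\varepsilon(N)\to0$ as $N\to\infty$. Then there is a constant $C_\mu$ depending only on $\mu$ such that, if $N$ is sufficiently large, for every $p\in A^{(N)}$, \[ \mathbb{E}^p\Big[\inf_{t\in[0,1]}\min_{i=1,\dots,N}\big(X_i(t)-X_i(0)\big)\mathbf{1}_{B^{(N)}}\Big]\ge -C_\mu\big(\sqrt{c_2(p)N^3}+N^2\big)\varepsilon(N)^{1/2}. \] In particular, if $N$ is sufficiently large, for every $p\in A^{(N)}$, \[ \mathbb{E}^p\Big[\inf_{t\in[0,1]}\big(k_c(P(t))-k_c(p)\big)\mathbf{1}_{B^{(N)}}\Big]\ge -C_\mu\big(\sqrt{c_2(p)N^3}+N^2\big)\varepsilon(N)^{1/2}. \] Both statements remain true if $(P,X)$ is replaced by the neutral process $(P^{(Y)},Y)$.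
   Context: Moran model with $N$ individuals. Individual $i$ has fitness type $X_i(t)$. $\bar S^{(N)}$ is the set of probability measures on $\mathbb{R}$ consisting of $N$ point masses of weight $1/N$ all located on a common set $l+\mathbb{Z}$ with $l\in\frac1N\mathbb{Z}$. Dynamics: (Mutation) each individual independently at rate $q\mu$ has its type increased by $1$ and at rate $(1-q)\mu$ decreased by $1$. (Selection) for each ordered pair $(i,j)$, at rate $\frac{s}{N}(X_i-X_j)^+$ individual $i$ replaces individual $j$ ($X_j$ set equal to $X_i$). (Resampling) for each ordered pair $(i,j)$, at rate $\frac1N$ individual $i$ replaces individual $j$. The process is driven by independent Poisson processes/random measures for these events; $\mathscr{F}_1$ is the $\sigma$-algebra generated by the driving noise (equivalently the process) up to time $1$. $P(t)=\frac1N\sum_i\delta_{X_i(t)}$; $\mathbb{P}^p,\mathbb{E}^p$ refer to the process started from a configuration with empirical measure $p$. For $p\in\bar S^{(N)}$: $p_k=p(\{k\})$, $p_{[k,\infty)}=\sum_{j\ge k}p_j$, $m(p)=\sum_k kp_k$, $c_2(p)=\sum_k(k-m(p))^2p_k$, and $k_c(p)=\max\{k:\ Np_{[k,\infty)}>\log^2N\}$. The neutral process $(P^{(Y)},Y)$ is defined by the same mutation and resampling mechanisms (same driving noise) but with no selection; $P^{(Y)}$ is its empirical measure. *)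

theory Defs
  imports "HOL-Probability.Probability" "HOL-Library.Multiset" "HOL-Library.Countable"
begin

text \<open>Labels of the points of the driving Poisson random measure.
  Up i / Down i: mutation of individual i by +1 / -1;
  Res i j: resampling, i replaces j;  Sel i j: selection, i replaces j.
  A point is a triple (label, time, auxiliary coordinate r).\<close>

datatype ev = Up nat | Down nat | Res nat nat | Sel nat nat

instance ev :: countable by countable_datatype

text \<open>For mutation/resampling labels the coordinate r is a dummy
  uniform mark in [0,1]; selection points have intensity (s/N) dt dr on [0,oo)^2 and a
  point (Sel i j, t, r) is effective iff r <= (X_i - X_j)^+, giving the selection rate
  (s/N)(X_i - X_j)^+.\<close>

definition noise_rate :: "nat \<Rightarrow> real \<Rightarrow> real \<Rightarrow> real \<Rightarrow> ev \<Rightarrow> real \<Rightarrow> real \<Rightarrow> real" where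
  "noise_rate N \<mu> q s e t r =
     (if t < 0 then 0 else
      (case e of
         Up i \<Rightarrow> (if i < N then q * \<mu> * indicator {0..1} r else 0)
       | Down i \<Rightarrow> (if i < N then (1 - q) * \<mu> * indicator {0..1} r else 0)
       | Res i j \<Rightarrow> (if i < N \<and> j < N then (1 / real N) * indicator {0..1} r else 0)
       | Sel i j \<Rightarrow> (if i < N \<and> j < N then (s / real N) * indicator {0..} r else 0)))"

definition noise_intensity :: "nat \<Rightarrow> real \<Rightarrow> real \<Rightarrow> real \<Rightarrow> (ev \<times> real \<times> real) measure" where
  "noise_intensity N \<mu> q s =
     density (count_space UNIV \<Otimes>\<^sub>M (lborel \<Otimes>\<^sub>M lborel))
       (\<lambda>(e, t, r). ennreal (noise_rate N \<mu> q s e t r))"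

definition poisson_rm :: "'w measure \<Rightarrow> ('w \<Rightarrow> 'a set) \<Rightarrow> 'a measure \<Rightarrow> bool" where
  "poisson_rm M Pts \<nu> \<longleftrightarrow>
     prob_space M \<and>
     (\<forall>A \<in> sets \<nu>. emeasure \<nu> A < \<infinity> \<longrightarrow>
        (AE \<omega> in M. finite (Pts \<omega> \<inter> A)) \<and>
        (\<lambda>\<omega>. card (Pts \<omega> \<inter> A)) \<in> measurable M (count_space UNIV) \<and>
        (\<forall>k::nat. measure M {\<omega> \<in> space M. card (Pts \<omega> \<inter> A) = k}
                   = measure \<nu> A ^ k / fact k * exp (- measure \<nu> A))) \<and>
     (\<forall>(I :: nat set) F. finite I \<longrightarrow> disjoint_family_on F I \<longrightarrow>
        (\<forall>k\<in>I. F k \<in> sets \<nu> \<and> emeasure \<nu> (F k) < \<infinity>) \<longrightarrow>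
        prob_space.indep_vars M (\<lambda>_. count_space UNIV) (\<lambda>k \<omega>. card (Pts \<omega> \<inter> F k)) I)"

definition noise_F1 :: "'w measure \<Rightarrow> ('w \<Rightarrow> (ev \<times> real \<times> real) set) \<Rightarrow> (ev \<times> real \<times> real) measure \<Rightarrow> 'w set set" where
  "noise_F1 M Pts \<nu> = sigma_sets (space M)
     {{\<omega> \<in> space M. card (Pts \<omega> \<inter> A) = n} | A n.
        A \<in> sets \<nu> \<and> emeasure \<nu> A < \<infinity> \<and> A \<subseteq> {(e, t, r). t \<le> 1}}"

text \<open>Effect of a point (label e, mark r) on a configuration y. The flag sel is True for
  the Moran model with selection and False for the neutral process (selection points
  are ignored).\<close>

definition step :: "bool \<Rightarrow> (nat \<Rightarrow> real) \<Rightarrow> ev \<times> real \<Rightarrow> (nat \<Rightarrow> real)" where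
  "step sel y er =
     (case er of (e, r) \<Rightarrow>
       (case e of
          Up i \<Rightarrow> y(i := y i + 1)
        | Down i \<Rightarrow> y(i := y i - 1)
        | Res i j \<Rightarrow> y(j := y i)
        | Sel i j \<Rightarrow> (if sel \<and> r \<le> max 0 (y i - y j) then y(j := y i) else y)))"

definition is_moran_path :: "bool \<Rightarrow> (ev \<times> real \<times> real) set \<Rightarrow> (nat \<Rightarrow> real) \<Rightarrow> (real \<Rightarrow> nat \<Rightarrow> real) \<Rightarrow> bool" where
  "is_moran_path sel Pts x0 X \<longleftrightarrow>
     (\<forall>t\<le>0. X t = x0) \<and>
     (\<forall>t\<ge>0. \<exists>\<delta>>0. \<forall>u. t \<le> u \<and> u < t + \<delta> \<longrightarrow> X u = X t) \<and>
     (\<forall>t>0. \<exists>\<delta>>0. \<exists>y. (\<forall>u. t - \<delta> < u \<and> u < t \<longrightarrow> X u = y) \<and>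
        X t = (if \<exists>!er. (fst er, t, snd er) \<in> Pts
               then step sel y (THE er. (fst er, t, snd er) \<in> Pts) else y))"

definition moran_path :: "bool \<Rightarrow> (ev \<times> real \<times> real) set \<Rightarrow> (nat \<Rightarrow> real) \<Rightarrow> real \<Rightarrow> nat \<Rightarrow> real" where
  "moran_path sel Pts x0 = (THE X. is_moran_path sel Pts x0 X)"

text \<open>An element of bar S^(N) (N atoms of weight 1/N) is represented by the multiset of
  its atoms, of size N.\<close>

definition emp :: "nat \<Rightarrow> (nat \<Rightarrow> real) \<Rightarrow> real multiset" where
  "emp N x = image_mset x (mset_set {..<N})"

definition Sbar :: "nat \<Rightarrow> real multiset set" where
  "Sbar N = {p. size p = N \<and> (\<exists>l. real N * l \<in> \<int> \<and> (\<forall>k \<in># p. k - l \<in> \<int>))}"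

definition mean :: "real multiset \<Rightarrow> real" where
  "mean p = (\<Sum>\<^sub># p) / real (size p)"

definition c2 :: "real multiset \<Rightarrow> real" where
  "c2 p = (\<Sum>\<^sub># (image_mset (\<lambda>k. (k - mean p)^2) p)) / real (size p)"

text \<open>k_c(p) = max{k in l+Z : N p_[k,oo) > log^2 N}, log = natural logarithm;
  the lattice l+Z is {k. exists x in supp p. k - x in Z}.\<close>

definition kc :: "real multiset \<Rightarrow> real" where
  "kc p = (GREATEST k. (\<exists>x \<in># p. k - x \<in> \<int>) \<and>
             real (size (filter_mset (\<lambda>x. k \<le> x) p)) > (ln (real (size p)))^2)"

end

theory Submission
  imports Defs
begin


definition Fj :: "bool \<Rightarrow> (ev\<times>real\<times>real) set \<Rightarrow> real \<Rightarrow> (nat\<Rightarrow>real) \<Rightarrow> (nat\<Rightarrow>real)" where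
 "Fj sel P t y = (if \<exists>!er. (fst er, t, snd er) \<in> P then step sel y (THE er. (fst er, t, snd er) \<in> P) else y)"

definition pathX :: "bool \<Rightarrow> (ev\<times>real\<times>real) set \<Rightarrow> real set \<Rightarrow> (nat\<Rightarrow>real) \<Rightarrow> real \<Rightarrow> nat \<Rightarrow> real" where
 "pathX sel P G x0 t = fold (Fj sel P) (sorted_list_of_set (G \<inter> {0<..t})) x0"

lemma sorted_insert_last:
  fixes S :: "real set"
  assumes "finite S" "\<forall>x\<in>S. x < t"
  shows "sorted_list_of_set (insert t S) = sorted_list_of_set S @ [t]"
proof -
  have 1: "sorted_wrt (<) (sorted_list_of_set S @ [t])"
    using assms by (auto simp: sorted_wrt_append strict_sorted_list_of_set)
  have 2: "set (sorted_list_of_set S @ [t]) = insert t S" using assms by auto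
  have 3: "distinct (sorted_list_of_set S @ [t])" using assms by auto
  have 4: "length (sorted_list_of_set S @ [t]) = card (insert t S)"
    using distinct_card[OF 3] 2 by simp
  show ?thesis
    apply (rule sorted_list_of_set_unique[THEN iffD1])
    using 1 2 4 assms(1) by (simp_all only: map_ident finite_insert subset_UNIV)
qed

lemma imp_0: "is_moran_path sel P x0 X \<Longrightarrow> t \<le> 0 \<Longrightarrow> X t = x0"
  unfolding is_moran_path_def by blast

lemma imp_right: "is_moran_path sel P x0 X \<Longrightarrow> t \<ge> 0 \<Longrightarrow>
   \<exists>\<delta>>0. \<forall>u. t \<le> u \<and> u < t + \<delta> \<longrightarrow> X u = X t"
  unfolding is_moran_path_def by blast

lemma imp_left: assumes "is_moran_path sel P x0 X" "t > 0"
  shows "\<exists>\<delta>>0. \<exists>y. (\<forall>u. t - \<delta> < u \<and> u < t \<longrightarrow> X u = y) \<and> X t = Fj sel P t y"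
proof -
  have H: "\<forall>t>0. \<exists>\<delta>>0. \<exists>y. (\<forall>u. t - \<delta> < u \<and> u < t \<longrightarrow> X u = y) \<and> X t = Fj sel P t y"
    using assms(1) unfolding is_moran_path_def Fj_def by (rule conjunct2[THEN conjunct2])
  show ?thesis using H assms(2) by blast
qed

lemma moran_unique:
  assumes X: "is_moran_path sel P x0 X" and Z: "is_moran_path sel P x0 Z"
  shows "X = Z"
proof (rule ccontr)
  assume "X \<noteq> Z"
  define B where "B = {t. X t \<noteq> Z t}"
  have Bne: "B \<noteq> {}" using \<open>X \<noteq> Z\<close> unfolding B_def by auto
  have Bpos: "\<And>t. t \<in> B \<Longrightarrow> t > 0"
  proof (rule ccontr)
    fix t assume "t \<in> B" "\<not> t > 0"
    hence "X t = x0" "Z t = x0" using imp_0[OF X] imp_0[OF Z] by auto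
    thus False using \<open>t \<in> B\<close> unfolding B_def by auto
  qed
  have bdd: "bdd_below B" using Bpos by (meson bdd_below.I less_imp_le)
  define c where "c = Inf B"
  have low: "\<And>u. u \<in> B \<Longrightarrow> c \<le> u" unfolding c_def using bdd by (simp add: cInf_lower)
  have c0: "c \<ge> 0" unfolding c_def using Bne Bpos by (meson cInf_greatest less_imp_le)
  show False
  proof (cases "c \<in> B")
    case True
    hence cpos: "c > 0" using Bpos by auto
    obtain d1 y1 where d1: "d1 > 0" "\<forall>u. c - d1 < u \<and> u < c \<longrightarrow> X u = y1"
        "X c = Fj sel P c y1"
      using imp_left[OF X cpos] by blast
    obtain d2 y2 where d2: "d2 > 0" "\<forall>u. c - d2 < u \<and> u < c \<longrightarrow> Z u = y2"
        "Z c = Fj sel P c y2"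
      using imp_left[OF Z cpos] by blast
    define u where "u = c - min d1 d2 / 2"
    have "u < c" "c - d1 < u" "c - d2 < u" using d1 d2 unfolding u_def by auto
    hence "u \<notin> B" using low by (meson not_le)
    hence "y1 = y2" using d1 d2 \<open>u < c\<close> \<open>c - d1 < u\<close> \<open>c - d2 < u\<close> unfolding B_def by auto
    hence "X c = Z c" using d1 d2 by simp
    thus False using True unfolding B_def by auto
  next
    case False
    obtain d1 where d1: "d1 > 0" "\<forall>u. c \<le> u \<and> u < c + d1 \<longrightarrow> X u = X c"
      using imp_right[OF X c0] by blast
    obtain d2 where d2: "d2 > 0" "\<forall>u. c \<le> u \<and> u < c + d2 \<longrightarrow> Z u = Z c"
      using imp_right[OF Z c0] by blast
    have "Inf B < c + min d1 d2" using d1 d2 unfolding c_def by simp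
    then obtain b where b: "b \<in> B" "b < c + min d1 d2" using Bne bdd by (meson cInf_lessD)
    have cb: "c \<le> b" using low[OF b(1)] .
    have "b < c + d1" "b < c + d2" using b(2) by auto
    hence "X b = X c" "Z b = Z c" using d1(2) d2(2) cb by blast+
    moreover have "X c = Z c" using False by (simp add: B_def)
    ultimately have "X b = Z b" by simp
    thus False using b(1) by (simp add: B_def)
  qed
qed

lemma pathX_is_moran:
  assumes fin: "\<And>t. finite (G \<inter> {0<..t})"
    and noj: "\<And>t. t > 0 \<Longrightarrow> t \<notin> G \<Longrightarrow>
       Fj sel P t (fold (Fj sel P) (sorted_list_of_set (G \<inter> {0<..<t})) x0)
         = fold (Fj sel P) (sorted_list_of_set (G \<inter> {0<..<t})) x0"
  shows "is_moran_path sel P x0 (pathX sel P G x0)"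
  unfolding is_moran_path_def
proof (intro conjI allI impI)
  fix t :: real assume "t \<le> 0"
  hence "G \<inter> {0<..t} = {}" by auto
  thus "pathX sel P G x0 t = x0" unfolding pathX_def by simp
next
  fix t :: real assume t0: "0 \<le> t"
  define S where "S = G \<inter> {t<..t+1}"
  have finS: "finite S" unfolding S_def
    by (rule finite_subset[OF _ fin[of "t+1"]]) (use t0 in auto)
  define d where "d = (if S = {} then 1 else Min S - t)"
  have dpos: "d > 0" unfolding d_def using finS S_def by auto
  have dle: "d \<le> 1"
  proof (cases "S = {}")
    case False
    hence "Min S \<in> S" using Min_in[OF finS] by blast
    thus ?thesis unfolding d_def S_def using False by (auto simp: S_def)
  qed (simp add: d_def)
  have "\<forall>u. t \<le> u \<and> u < t + d \<longrightarrow> pathX sel P G x0 u = pathX sel P G x0 t"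
  proof (intro allI impI)
    fix u assume u: "t \<le> u \<and> u < t + d"
    have "G \<inter> {0<..u} = G \<inter> {0<..t}"
    proof (auto)
      fix x assume x: "x \<in> G" "0 < x" "x \<le> u"
      show "x \<le> t"
      proof (rule ccontr)
        assume "\<not> x \<le> t"
        hence xS: "x \<in> S" unfolding S_def using x u dle by auto
        hence "Min S \<le> x" using finS by simp
        thus False using xS u x unfolding d_def by (auto split: if_splits)
      qed
    next
      fix x assume "x \<le> t" thus "x \<le> u" using u by simp
    qed
    thus "pathX sel P G x0 u = pathX sel P G x0 t" unfolding pathX_def by simp
  qed
  thus "\<exists>d>0. \<forall>u. t \<le> u \<and> u < t + d \<longrightarrow> pathX sel P G x0 u = pathX sel P G x0 t"
    using dpos by blast
next
  fix t :: real assume t0: "0 < t"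
  define S where "S = G \<inter> {0<..<t}"
  have finS: "finite S" unfolding S_def
    by (rule finite_subset[OF _ fin[of "t"]]) auto
  define d where "d = (if S = {} then t else t - Max S)"
  have dpos: "d > 0" unfolding d_def using finS S_def t0 by auto
  define y where "y = fold (Fj sel P) (sorted_list_of_set S) x0"
  have left: "\<forall>u. t - d < u \<and> u < t \<longrightarrow> pathX sel P G x0 u = y"
  proof (intro allI impI)
    fix u assume u: "t - d < u \<and> u < t"
    have "G \<inter> {0<..u} = S"
    proof (auto simp: S_def)
      fix x assume "x \<in> G" "0 < x" "x \<le> u" thus "x < t" using u by simp
    next
      fix x assume x: "x \<in> G" "0 < x" "x < t"
      hence "x \<in> S" unfolding S_def by simp
      hence "x \<le> Max S" "S \<noteq> {}" using finS by auto
      thus "x \<le> u" using u unfolding d_def by auto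
    qed
    thus "pathX sel P G x0 u = y" unfolding pathX_def y_def by simp
  qed
  have jump: "pathX sel P G x0 t = Fj sel P t y"
  proof (cases "t \<in> G")
    case True
    have "G \<inter> {0<..t} = insert t S" unfolding S_def using True t0 by auto
    hence "sorted_list_of_set (G \<inter> {0<..t}) = sorted_list_of_set S @ [t]"
      using sorted_insert_last[OF finS] unfolding S_def by auto
    thus ?thesis unfolding pathX_def y_def by simp
  next
    case False
    have "G \<inter> {0<..t} = S" unfolding S_def using False by (auto simp: less_le)
    thus ?thesis unfolding pathX_def y_def S_def using noj[OF t0 False] by simp
  qed
  show "\<exists>d>0. \<exists>y. (\<forall>u. t - d < u \<and> u < t \<longrightarrow> pathX sel P G x0 u = y) \<and>
          pathX sel P G x0 t = (if \<exists>!er. (fst er, t, snd er) \<in> P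
             then step sel y (THE er. (fst er, t, snd er) \<in> P) else y)"
    using dpos left jump unfolding Fj_def by blast
qed

lemma moran_path_eq:
  assumes "is_moran_path sel P x0 X"
  shows "moran_path sel P x0 = X"
  unfolding moran_path_def using assms moran_unique by blast



definition valid :: "nat \<Rightarrow> ev \<Rightarrow> bool" where
 "valid N e = (case e of Up i \<Rightarrow> i<N | Down i \<Rightarrow> i<N | Res i j \<Rightarrow> i<N \<and> j<N | Sel i j \<Rightarrow> i<N \<and> j<N)"
definition isUp :: "ev \<Rightarrow> bool" where "isUp e = (case e of Up i \<Rightarrow> True | _ \<Rightarrow> False)"
definition isDown :: "ev \<Rightarrow> bool" where "isDown e = (case e of Down i \<Rightarrow> True | _ \<Rightarrow> False)"
definition isSel :: "ev \<Rightarrow> bool" where "isSel e = (case e of Sel i j \<Rightarrow> True | _ \<Rightarrow> False)"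
definition lo :: "nat \<Rightarrow> (nat\<Rightarrow>real) \<Rightarrow> real" where "lo N y = Min (y ` {..<N})"
definition hi :: "nat \<Rightarrow> (nat\<Rightarrow>real) \<Rightarrow> real" where "hi N y = Max (y ` {..<N})"

lemma lo_le: "k < N \<Longrightarrow> lo N y \<le> y k" by (auto simp: lo_def)
lemma hi_ge: "k < N \<Longrightarrow> y k \<le> hi N y" by (auto simp: hi_def)
lemma lo_ge: "0 < N \<Longrightarrow> m \<le> lo N y \<longleftrightarrow> (\<forall>k<N. m \<le> y k)"
  unfolding lo_def by (subst Min_ge_iff) auto
lemma hi_le: "0 < N \<Longrightarrow> hi N y \<le> m \<longleftrightarrow> (\<forall>k<N. y k \<le> m)"
  unfolding hi_def by (subst Max_le_iff) auto

lemma step_lo: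
  assumes "valid N e" "0 < N"
  shows "lo N y - (if isDown e then 1 else 0) \<le> lo N (step sel y (e,r))"
  unfolding lo_ge[OF assms(2)]
proof (intro allI impI)
  fix k assume k: "k < N"
  show "lo N y - (if isDown e then 1 else 0) \<le> step sel y (e, r) k"
    using assms(1) lo_le[OF k, of y]
    by (cases e) (auto simp: step_def valid_def isDown_def intro: lo_le)
qed

lemma step_hi:
  assumes "valid N e" "0 < N"
  shows "hi N (step sel y (e,r)) \<le> hi N y + (if isUp e then 1 else 0)"
  unfolding hi_le[OF assms(2)]
proof (intro allI impI)
  fix k assume k: "k < N"
  show "step sel y (e, r) k \<le> hi N y + (if isUp e then 1 else 0)"
    using assms(1) hi_ge[OF k, of y]
    by (cases e) (auto simp: step_def valid_def isUp_def intro: hi_ge)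
qed

lemma step_lat:
  assumes "valid N e" "\<forall>i<N. y i - l \<in> \<int>"
  shows "\<forall>i<N. step sel y (e,r) i - l \<in> \<int>"
proof (intro allI impI)
  fix k assume k: "k < N"
  have a: "y k + 1 - l \<in> \<int>" "y k - 1 - l \<in> \<int>" if "k < N" for k
    using assms(2) that Ints_add[of "y k - l" 1] Ints_diff[of "y k - l" 1]
    by (auto simp: algebra_simps)
  show "step sel y (e, r) k - l \<in> \<int>"
    using assms k a by (cases e) (auto simp: step_def valid_def)
qed

lemma Fj_cases:
  assumes A: "\<exists>!er. (fst er, t, snd er) \<in> P"
  obtains e r where "(e,t,r) \<in> P" "Fj sel P t y = step sel y (e,r)"
     "\<And>x. x \<in> P \<Longrightarrow> fst (snd x) = t \<Longrightarrow> x = (e,t,r)"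
proof -
  obtain er where er: "(fst er, t, snd er) \<in> P" and u: "\<And>er'. (fst er', t, snd er') \<in> P \<Longrightarrow> er' = er"
    using A by (elim ex1E) blast
  have th: "(THE er. (fst er, t, snd er) \<in> P) = er" using er u by (rule the_equality)
  have F: "Fj sel P t y = step sel y (fst er, snd er)" unfolding Fj_def th using A by simp
  have U: "x = (fst er, t, snd er)" if x: "x \<in> P" "fst (snd x) = t" for x
  proof -
    obtain a b c where xe: "x = (a,b,c)" by (cases x)
    have "(fst (a,c), t, snd (a,c)) \<in> P" using x xe by simp
    hence "(a,c) = er" by (rule u)
    thus ?thesis using xe x by auto
  qed
  show ?thesis by (rule that[OF er F U])
qed

lemma Fj_lo:
  assumes V: "\<forall>x\<in>P. valid N (fst x)" and N: "0 < N"
  shows "lo N y - real (card (P \<inter> {x. isDown (fst x) \<and> fst (snd x) = t})) \<le> lo N (Fj sel P t y)"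
proof (cases "\<exists>!er. (fst er, t, snd er) \<in> P")
  case True
  obtain e r where er: "(e,t,r) \<in> P" "Fj sel P t y = step sel y (e,r)"
     "\<And>x. x \<in> P \<Longrightarrow> fst (snd x) = t \<Longrightarrow> x = (e,t,r)"
    using Fj_cases[OF True, where sel=sel and y=y] by blast
  have v: "valid N e" using V er(1) by force
  show ?thesis
  proof (cases "isDown e")
    case True
    have "P \<inter> {x. isDown (fst x) \<and> fst (snd x) = t} = {(e,t,r)}"
    proof
      show "P \<inter> {x. isDown (fst x) \<and> fst (snd x) = t} \<subseteq> {(e,t,r)}" using er(3) by blast
      show "{(e,t,r)} \<subseteq> P \<inter> {x. isDown (fst x) \<and> fst (snd x) = t}" using er(1) True by simp
    qed
    thus ?thesis using step_lo[OF v N, of y sel r] er(2) True by simp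
  next
    case False
    thus ?thesis using step_lo[OF v N, of y sel r] er(2) by simp
  qed
next
  case False
  thus ?thesis unfolding Fj_def by simp
qed

lemma Fj_hi:
  assumes V: "\<forall>x\<in>P. valid N (fst x)" and N: "0 < N"
  shows "hi N (Fj sel P t y) \<le> hi N y + real (card (P \<inter> {x. isUp (fst x) \<and> fst (snd x) = t}))"
proof (cases "\<exists>!er. (fst er, t, snd er) \<in> P")
  case True
  obtain e r where er: "(e,t,r) \<in> P" "Fj sel P t y = step sel y (e,r)"
     "\<And>x. x \<in> P \<Longrightarrow> fst (snd x) = t \<Longrightarrow> x = (e,t,r)"
    using Fj_cases[OF True, where sel=sel and y=y] by blast
  have v: "valid N e" using V er(1) by force
  show ?thesis
  proof (cases "isUp e")
    case True
    have "P \<inter> {x. isUp (fst x) \<and> fst (snd x) = t} = {(e,t,r)}"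
    proof
      show "P \<inter> {x. isUp (fst x) \<and> fst (snd x) = t} \<subseteq> {(e,t,r)}" using er(3) by blast
      show "{(e,t,r)} \<subseteq> P \<inter> {x. isUp (fst x) \<and> fst (snd x) = t}" using er(1) True by simp
    qed
    thus ?thesis using step_hi[OF v N, of sel y r] er(2) True by simp
  next
    case False
    thus ?thesis using step_hi[OF v N, of sel y r] er(2) by simp
  qed
next
  case False
  thus ?thesis unfolding Fj_def by simp
qed

lemma Fj_lat:
  assumes V: "\<forall>x\<in>P. valid N (fst x)" and "\<forall>i<N. y i - l \<in> \<int>"
  shows "\<forall>i<N. Fj sel P t y i - l \<in> \<int>"
proof (cases "\<exists>!er. (fst er, t, snd er) \<in> P")
  case True
  obtain e r where er: "(e,t,r) \<in> P" "Fj sel P t y = step sel y (e,r)"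
     "\<And>x. x \<in> P \<Longrightarrow> fst (snd x) = t \<Longrightarrow> x = (e,t,r)"
    using Fj_cases[OF True, where sel=sel and y=y] by blast
  have v: "valid N e" using V er(1) by force
  show ?thesis using step_lat[OF v assms(2)] er(2) by simp
next
  case False
  thus ?thesis using assms unfolding Fj_def by simp
qed

lemma fold_lat:
  assumes V: "\<forall>x\<in>P. valid N (fst x)" and "\<forall>i<N. y i - l \<in> \<int>"
  shows "\<forall>i<N. fold (Fj sel P) L y i - l \<in> \<int>"
  using assms(2)
proof (induction L arbitrary: y)
  case (Cons a L)
  show ?case using Cons.IH[OF Fj_lat[OF V Cons.prems]] by simp
qed simp

lemma fold_lo:
  assumes V: "\<forall>x\<in>P. valid N (fst x)" and N: "0 < N" and "distinct L"
    and fin: "finite (P \<inter> {x. isDown (fst x) \<and> fst (snd x) \<in> set L})"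
  shows "lo N y - real (card (P \<inter> {x. isDown (fst x) \<and> fst (snd x) \<in> set L})) \<le> lo N (fold (Fj sel P) L y)"
  using assms(3,4)
proof (induction L rule: rev_induct)
  case (snoc t L)
  let ?A = "P \<inter> {x. isDown (fst x) \<and> fst (snd x) \<in> set L}"
  let ?B = "P \<inter> {x. isDown (fst x) \<and> fst (snd x) = t}"
  have eq: "P \<inter> {x. isDown (fst x) \<and> fst (snd x) \<in> set (L @ [t])} = ?A \<union> ?B" by auto
  have finA: "finite ?A" "finite ?B" using snoc.prems(2) unfolding eq by auto
  have disj: "?A \<inter> ?B = {}" using snoc.prems(1) by auto
  have c: "card (?A \<union> ?B) = card ?A + card ?B" using card_Un_disjoint[OF finA disj] .
  have IH: "lo N y - real (card ?A) \<le> lo N (fold (Fj sel P) L y)"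
    using snoc.IH snoc.prems finA by simp
  have "lo N (fold (Fj sel P) L y) - real (card ?B) \<le> lo N (Fj sel P t (fold (Fj sel P) L y))"
    by (rule Fj_lo[OF V N])
  thus ?case using IH unfolding eq c by simp
qed simp

lemma fold_hi:
  assumes V: "\<forall>x\<in>P. valid N (fst x)" and N: "0 < N" and "distinct L"
    and fin: "finite (P \<inter> {x. isUp (fst x) \<and> fst (snd x) \<in> set L})"
  shows "hi N (fold (Fj sel P) L y) \<le> hi N y + real (card (P \<inter> {x. isUp (fst x) \<and> fst (snd x) \<in> set L}))"
  using assms(3,4)
proof (induction L rule: rev_induct)
  case (snoc t L)
  let ?A = "P \<inter> {x. isUp (fst x) \<and> fst (snd x) \<in> set L}"
  let ?B = "P \<inter> {x. isUp (fst x) \<and> fst (snd x) = t}"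
  have eq: "P \<inter> {x. isUp (fst x) \<and> fst (snd x) \<in> set (L @ [t])} = ?A \<union> ?B" by auto
  have finA: "finite ?A" "finite ?B" using snoc.prems(2) unfolding eq by auto
  have disj: "?A \<inter> ?B = {}" using snoc.prems(1) by auto
  have c: "card (?A \<union> ?B) = card ?A + card ?B" using card_Un_disjoint[OF finA disj] .
  have IH: "hi N (fold (Fj sel P) L y) \<le> hi N y + real (card ?A)"
    using snoc.IH snoc.prems finA by simp
  have "hi N (Fj sel P t (fold (Fj sel P) L y)) \<le> hi N (fold (Fj sel P) L y) + real (card ?B)"
    by (rule Fj_hi[OF V N])
  thus ?case using IH unfolding eq c by simp
qed simp



lemma det_main:
  fixes P :: "(ev\<times>real\<times>real) set" and x0 :: "nat \<Rightarrow> real"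
  assumes N: "0 < N"
    and V: "\<forall>x\<in>P. valid N (fst x) \<and> 0 \<le> fst (snd x) \<and> 0 \<le> snd (snd x) \<and> (\<not> isSel (fst x) \<longrightarrow> snd (snd x) \<le> 1)"
    and Fin: "\<And>T R::nat. finite (P \<inter> {x. fst (snd x) \<le> real T \<and> snd (snd x) \<le> real R})"
    and lat: "\<forall>i<N. x0 i - l \<in> \<int>"
  shows "\<forall>t\<in>{0..1}. \<forall>i<N.
      - (hi N x0 - lo N x0 + real (card (P \<inter> {x. isDown (fst x) \<and> fst (snd x) \<le> 1})))
        \<le> moran_path sel P x0 t i - x0 i
      \<and> moran_path sel P x0 t i - l \<in> \<int>"
proof -
  have V1: "\<forall>x\<in>P. valid N (fst x)" using V by blast
  have finr: "finite (P \<inter> {x. fst (snd x) \<le> T \<and> snd (snd x) \<le> R})" for T R :: real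
  proof -
    have "P \<inter> {x. fst (snd x) \<le> T \<and> snd (snd x) \<le> R}
       \<subseteq> P \<inter> {x. fst (snd x) \<le> real (nat \<lceil>T\<rceil>) \<and> snd (snd x) \<le> real (nat \<lceil>R\<rceil>)}"
      by (auto, linarith+)
    thus ?thesis using Fin finite_subset by blast
  qed
  define UD where "UD T = P \<inter> {x. (isUp (fst x) \<or> isDown (fst x)) \<and> fst (snd x) \<le> T}" for T
  have UDsub: "UD T \<subseteq> P \<inter> {x. fst (snd x) \<le> T \<and> snd (snd x) \<le> 1}" for T
  proof
    fix x assume x: "x \<in> UD T"
    hence "x \<in> P" "isUp (fst x) \<or> isDown (fst x)" "fst (snd x) \<le> T" unfolding UD_def by auto
    moreover have "\<not> isSel (fst x)" using calculation(2)
      by (cases "fst x") (auto simp: isUp_def isDown_def isSel_def)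
    ultimately show "x \<in> P \<inter> {x. fst (snd x) \<le> T \<and> snd (snd x) \<le> 1}" using V by auto
  qed
  have finUD: "finite (UD T)" for T using finite_subset[OF UDsub finr] .
  define K where "K T = card (UD T)" for T
  have Kmono: "T \<le> T' \<Longrightarrow> K T \<le> K T'" for T T'
    unfolding K_def by (rule card_mono[OF finUD]) (auto simp: UD_def)
  define R where "R T = hi N x0 - lo N x0 + real (K T) + 1" for T
  have hilo: "lo N y \<le> hi N y" for y using lo_le[OF N] hi_ge[OF N] by (meson order_trans)
  have R1: "1 \<le> R T" for T using hilo[of x0] unfolding R_def by simp
  have Rmono: "T \<le> T' \<Longrightarrow> R T \<le> R T'" for T T' using Kmono[of T T'] unfolding R_def by simp
  define G where "G = {t. 0 < t \<and> (\<exists>x\<in>P. fst (snd x) = t \<and> snd (snd x) \<le> R (of_int \<lceil>t\<rceil>))}"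
  have finG: "finite (G \<inter> {0<..t})" for t
  proof -
    have "G \<inter> {0<..t} \<subseteq> (\<lambda>x. fst (snd x)) ` (P \<inter> {x. fst (snd x) \<le> t \<and> snd (snd x) \<le> R (of_int \<lceil>t\<rceil>)})"
    proof
      fix \<tau> assume "\<tau> \<in> G \<inter> {0<..t}"
      then obtain x where x: "x \<in> P" "fst (snd x) = \<tau>" "snd (snd x) \<le> R (of_int \<lceil>\<tau>\<rceil>)" "\<tau> \<le> t"
        unfolding G_def by auto
      have "R (of_int \<lceil>\<tau>\<rceil>) \<le> R (of_int \<lceil>t\<rceil>)" using x(4) by (intro Rmono) (simp add: ceiling_mono)
      thus "\<tau> \<in> (\<lambda>x. fst (snd x)) ` (P \<inter> {x. fst (snd x) \<le> t \<and> snd (snd x) \<le> R (of_int \<lceil>t\<rceil>)})"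
        using x by (intro image_eqI[of _ _ x]) auto
    qed
    thus ?thesis using finr finite_subset by blast
  qed
  have spread: "hi N (fold (Fj sel P) L x0) - lo N (fold (Fj sel P) L x0) \<le> hi N x0 - lo N x0 + real (K T)"
    if L: "distinct L" "\<forall>\<tau>\<in>set L. \<tau> \<le> T" for L T
  proof -
    let ?A = "P \<inter> {x. isDown (fst x) \<and> fst (snd x) \<in> set L}"
    let ?B = "P \<inter> {x. isUp (fst x) \<and> fst (snd x) \<in> set L}"
    have sub: "?A \<union> ?B \<subseteq> UD T" using L(2) unfolding UD_def by auto
    have fA: "finite ?A" "finite ?B" using finite_subset[OF sub finUD] by auto
    have ud: "\<not> (isUp e \<and> isDown e)" for e by (cases e) (auto simp: isUp_def isDown_def)
    have disj: "?A \<inter> ?B = {}" using ud by blast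
    have "card ?A + card ?B \<le> K T"
      unfolding K_def card_Un_disjoint[OF fA disj, symmetric] by (rule card_mono[OF finUD sub])
    moreover have "lo N x0 - real (card ?A) \<le> lo N (fold (Fj sel P) L x0)"
      by (rule fold_lo[OF V1 N L(1) fA(1)])
    moreover have "hi N (fold (Fj sel P) L x0) \<le> hi N x0 + real (card ?B)"
      by (rule fold_hi[OF V1 N L(1) fA(2)])
    ultimately show ?thesis by linarith
  qed
  have noj: "Fj sel P t (fold (Fj sel P) (sorted_list_of_set (G \<inter> {0<..<t})) x0)
         = fold (Fj sel P) (sorted_list_of_set (G \<inter> {0<..<t})) x0" if t: "0 < t" "t \<notin> G" for t
  proof (cases "\<exists>!er. (fst er, t, snd er) \<in> P")
    case True
    let ?y = "fold (Fj sel P) (sorted_list_of_set (G \<inter> {0<..<t})) x0"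
    obtain e r where er: "(e,t,r) \<in> P" "Fj sel P t ?y = step sel ?y (e,r)"
      using Fj_cases[OF True, where sel=sel and y="?y"] by blast
    have rbig: "R (of_int \<lceil>t\<rceil>) < r" using t er(1) unfolding G_def by force
    have Ve: "valid N e" "\<not> isSel e \<longrightarrow> r \<le> 1" using V er(1) by auto
    hence "isSel e" using rbig R1[of "of_int \<lceil>t\<rceil>"] by linarith
    then obtain i j where e: "e = Sel i j" "i < N" "j < N" using Ve(1)
      by (cases e) (auto simp: isSel_def valid_def)
    have finS: "finite (G \<inter> {0<..<t})" by (rule finite_subset[OF _ finG[of t]]) auto
    have "hi N ?y - lo N ?y \<le> hi N x0 - lo N x0 + real (K (of_int \<lceil>t\<rceil>))"
    proof (rule spread)
      show "distinct (sorted_list_of_set (G \<inter> {0<..<t}))" by simp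
      show "\<forall>\<tau>\<in>set (sorted_list_of_set (G \<inter> {0<..<t})). \<tau> \<le> of_int \<lceil>t\<rceil>"
        using finS by (auto intro: order_trans[OF _ le_of_int_ceiling])
    qed
    moreover have "?y i \<le> hi N ?y" "lo N ?y \<le> ?y j" using e hi_ge lo_le by auto
    ultimately have "max 0 (?y i - ?y j) < r" using rbig hilo[of ?y] unfolding R_def by auto
    hence "step sel ?y (e,r) = ?y" unfolding e(1) step_def by auto
    thus ?thesis using er(2) by simp
  next
    case False
    thus ?thesis unfolding Fj_def by simp
  qed
  have mp: "moran_path sel P x0 = pathX sel P G x0"
    by (rule moran_path_eq, rule pathX_is_moran[OF finG noj]) auto
  show ?thesis
  proof (intro ballI allI impI conjI)
    fix t :: real and i assume t: "t \<in> {0..1}" and i: "i < N"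
    let ?L = "sorted_list_of_set (G \<inter> {0<..t})"
    have X: "moran_path sel P x0 t = fold (Fj sel P) ?L x0" unfolding mp pathX_def ..
    let ?A = "P \<inter> {x. isDown (fst x) \<and> fst (snd x) \<in> set ?L}"
    let ?D = "P \<inter> {x. isDown (fst x) \<and> fst (snd x) \<le> 1}"
    have subD: "?A \<subseteq> ?D" using t finG[of t] by auto
    have finD: "finite ?D" by (rule finite_subset[OF _ finUD[of 1]]) (auto simp: UD_def)
    have "lo N x0 - real (card ?A) \<le> lo N (fold (Fj sel P) ?L x0)"
      by (rule fold_lo[OF V1 N]) (use finite_subset[OF subD finD] in auto)
    moreover have "card ?A \<le> card ?D" by (rule card_mono[OF finD subD])
    moreover have "lo N (fold (Fj sel P) ?L x0) \<le> fold (Fj sel P) ?L x0 i" by (rule lo_le[OF i])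
    moreover have "x0 i \<le> hi N x0" by (rule hi_ge[OF i])
    ultimately show "- (hi N x0 - lo N x0 + real (card ?D)) \<le> moran_path sel P x0 t i - x0 i"
      unfolding X by linarith
    show "moran_path sel P x0 t i - l \<in> \<int>" unfolding X using fold_lat[OF V1 lat] i by blast
  qed
qed



lemma emp_size: "size (emp N y) = N" by (simp add: emp_def)
lemma emp_mem: "x \<in># emp N y \<longleftrightarrow> (\<exists>i<N. x = y i)" by (auto simp: emp_def in_image_mset)
lemma emp_filter: "size (filter_mset Q (emp N y)) = card {i\<in>{..<N}. Q (y i)}"
  by (simp add: emp_def filter_mset_image_mset)

definition Sk :: "real multiset \<Rightarrow> real set" where
  "Sk p = {k. (\<exists>x \<in># p. k - x \<in> \<int>) \<and> real (size (filter_mset (\<lambda>x. k \<le> x) p)) > (ln (real (size p)))^2}"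

lemma kc_Sk: "kc p = (GREATEST k. k \<in> Sk p)" unfolding kc_def Sk_def by simp

lemma lat_finite: "finite {k::real. k - l \<in> \<int> \<and> a \<le> k \<and> k \<le> b}"
proof -
  have "{k::real. k - l \<in> \<int> \<and> a \<le> k \<and> k \<le> b} \<subseteq> (\<lambda>z. l + of_int z) ` {\<lceil>a - l\<rceil>..\<lfloor>b - l\<rfloor>}"
  proof
    fix k assume k: "k \<in> {k::real. k - l \<in> \<int> \<and> a \<le> k \<and> k \<le> b}"
    then obtain z where z: "k - l = of_int z" by (auto elim: Ints_cases)
    have "z \<in> {\<lceil>a - l\<rceil>..\<lfloor>b - l\<rfloor>}" using k z by (auto simp: ceiling_le_iff le_floor_iff)
    moreover have "k = l + of_int z" using z by simp
    ultimately show "k \<in> (\<lambda>z. l + of_int z) ` {\<lceil>a - l\<rceil>..\<lfloor>b - l\<rfloor>}" by blast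
  qed
  thus ?thesis by (rule finite_subset) simp
qed

lemma kc_greatest:
  assumes N: "0 < N" and lat: "\<forall>i<N. y i - l \<in> \<int>" and k0: "k0 \<in> Sk (emp N y)"
  shows "kc (emp N y) \<in> Sk (emp N y) \<and> (\<forall>k\<in>Sk (emp N y). k \<le> kc (emp N y))"
proof -
  let ?S = "Sk (emp N y)"
  have bnd: "k - l \<in> \<int> \<and> k \<le> hi N y" if k: "k \<in> ?S" for k
  proof -
    obtain x where x: "x \<in># emp N y" "k - x \<in> \<int>" using k unfolding Sk_def by auto
    obtain i where i: "i < N" "x = y i" using x(1) emp_mem by blast
    have "k - l = (k - x) + (y i - l)" using i by simp
    hence "k - l \<in> \<int>" using x(2) lat i by (metis Ints_add)
    moreover have "card {i\<in>{..<N}. k \<le> y i} > 0"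
    proof -
      have "real (card {i\<in>{..<N}. k \<le> y i}) > (ln (real N))^2"
        using k unfolding Sk_def emp_filter emp_size by simp
      moreover have "(ln (real N))^2 \<ge> 0" by simp
      ultimately show ?thesis by linarith
    qed
    then obtain j where "j < N" "k \<le> y j" by (metis (no_types, lifting) card_gt_0_iff empty_Collect_eq lessThan_iff mem_Collect_eq)
    hence "k \<le> hi N y" using hi_ge by (meson order_trans)
    ultimately show ?thesis by simp
  qed
  define F where "F = ?S \<inter> {k0..}"
  have finF: "finite F"
    by (rule finite_subset[OF _ lat_finite[of l k0 "hi N y"]]) (auto simp: F_def dest: bnd)
  have k0F: "k0 \<in> F" using k0 unfolding F_def by simp
  define m where "m = Max F"
  have mF: "m \<in> F" unfolding m_def using finF k0F by (intro Max_in) auto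
  have mge: "\<forall>k\<in>?S. k \<le> m"
  proof
    fix k assume k: "k \<in> ?S"
    show "k \<le> m"
    proof (cases "k0 \<le> k")
      case True hence "k \<in> F" using k unfolding F_def by simp
      thus ?thesis unfolding m_def using finF by simp
    next
      case False
      moreover have "k0 \<le> m" unfolding m_def using finF k0F by simp
      ultimately show ?thesis by simp
    qed
  qed
  have "kc (emp N y) = m" unfolding kc_Sk
    by (rule Greatest_equality) (use mF mge F_def in auto)
  thus ?thesis using mF mge unfolding F_def by simp
qed

lemma kc_bound:
  assumes N: "0 < N" and L: "(ln (real N))^2 < real N"
    and latx: "\<forall>i<N. x0 i - l \<in> \<int>" and laty: "\<forall>i<N. y i - l \<in> \<int>"
    and W: "W \<in> \<int>" and le: "\<forall>i<N. x0 i - W \<le> y i"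
  shows "kc (emp N x0) - W \<le> kc (emp N y)"
proof -
  have lo0: "lo N x0 \<in> Sk (emp N x0)"
  proof -
    have "lo N x0 \<in> x0 ` {..<N}" unfolding lo_def using N by (intro Min_in) auto
    then obtain j where j: "j < N" "lo N x0 = x0 j" by auto
    have "{i\<in>{..<N}. lo N x0 \<le> x0 i} = {..<N}" using lo_le by auto
    hence "real (size (filter_mset (\<lambda>x. lo N x0 \<le> x) (emp N x0))) = real N"
      unfolding emp_filter by simp
    moreover have "x0 j \<in># emp N x0" using j emp_mem by blast
    ultimately show ?thesis unfolding Sk_def emp_size using L j by force
  qed
  obtain hx: "kc (emp N x0) \<in> Sk (emp N x0)" using kc_greatest[OF N latx lo0] by blast
  let ?k = "kc (emp N x0)"
  have "?k - W \<in> Sk (emp N y)"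
  proof -
    obtain x where x: "x \<in># emp N x0" "?k - x \<in> \<int>" using hx unfolding Sk_def by auto
    obtain a where a: "a < N" "x = x0 a" using x(1) emp_mem by blast
    have "?k - W - y 0 = (?k - x) + (x0 a - l) - (y 0 - l) - W" using a by simp
    hence in1: "?k - W - y 0 \<in> \<int>" using x(2) latx laty a N W by (metis Ints_add Ints_diff)
    have y0: "y 0 \<in># emp N y" using N emp_mem by blast
    have "{i\<in>{..<N}. ?k \<le> x0 i} \<subseteq> {i\<in>{..<N}. ?k - W \<le> y i}" using le by force
    hence "card {i\<in>{..<N}. ?k \<le> x0 i} \<le> card {i\<in>{..<N}. ?k - W \<le> y i}"
      by (intro card_mono) auto
    moreover have "real (card {i\<in>{..<N}. ?k \<le> x0 i}) > (ln (real N))^2"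
      using hx unfolding Sk_def emp_filter emp_size by simp
    ultimately have "real (card {i\<in>{..<N}. ?k - W \<le> y i}) > (ln (real N))^2" by linarith
    thus ?thesis unfolding Sk_def emp_filter emp_size using in1 y0 by blast
  qed
  have lo1: "?k - W \<in> Sk (emp N y)" by fact
  thus ?thesis using kc_greatest[OF N laty lo1] by blast
qed



abbreviation "nr N \<mu> q s x \<equiv> noise_rate N \<mu> q s (fst x) (fst (snd x)) (snd (snd x))"
abbreviation "PM \<equiv> (count_space UNIV \<Otimes>\<^sub>M (lborel \<Otimes>\<^sub>M lborel) :: (ev \<times> real \<times> real) measure)"

lemma nr_meas1: "(\<lambda>y. noise_rate N \<mu> q s e (fst y) (snd y)) \<in> borel_measurable (lborel \<Otimes>\<^sub>M lborel)"
proof (cases e)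
  case (Up i) show ?thesis unfolding noise_rate_def Up apply (simp only: ev.case) by measurable
next
  case (Down i) show ?thesis unfolding noise_rate_def Down apply (simp only: ev.case) by measurable
next
  case (Res i j) show ?thesis unfolding noise_rate_def Res apply (simp only: ev.case) by measurable
next
  case (Sel i j) show ?thesis unfolding noise_rate_def Sel apply (simp only: ev.case) by measurable
qed

lemma nr_meas: "(\<lambda>x. nr N \<mu> q s x) \<in> borel_measurable PM"
  by (rule measurable_pair_measure_countable1) (auto intro: nr_meas1)

lemma nu_eq: "noise_intensity N \<mu> q s = density PM (\<lambda>x. ennreal (nr N \<mu> q s x))"
  unfolding noise_intensity_def by (rule arg_cong[where f="density PM"]) (auto simp: fun_eq_iff)

lemma sets_nu: "sets (noise_intensity N \<mu> q s) = sets PM"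
  unfolding nu_eq by simp

lemma emeasure_nu: "A \<in> sets PM \<Longrightarrow>
   emeasure (noise_intensity N \<mu> q s) A = (\<integral>\<^sup>+x. ennreal (nr N \<mu> q s x) * indicator A x \<partial>PM)"
  unfolding nu_eq by (rule emeasure_density) (use nr_meas in auto)

lemma nr_bounds:
  assumes "0 \<le> q" "q \<le> 1" "0 < \<mu>" "0 < s" "0 < N"
  shows "0 \<le> noise_rate N \<mu> q s e t r" "noise_rate N \<mu> q s e t r \<le> \<mu> + 1 + s"
proof -
  have N1: "1 / real N \<le> 1" "s / real N \<le> s" using assms by (auto simp: field_simps)
  have X: "1 / real N \<le> \<mu> + 1 + s" "s / real N \<le> \<mu> + 1 + s" "q * \<mu> \<le> \<mu> + 1 + s" "(1 - q) * \<mu> \<le> \<mu> + 1 + s"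
    "0 \<le> q * \<mu>" "0 \<le> (1 - q) * \<mu>" "0 \<le> s / real N"
  proof -
    have a: "q * \<mu> \<le> \<mu>" "(1-q) * \<mu> \<le> \<mu>" using assms by (auto intro: mult_left_le_one_le)
    have b: "0 \<le> q * \<mu>" "0 \<le> (1 - q) * \<mu>" "0 \<le> s / real N" using assms by auto
    show "1 / real N \<le> \<mu> + 1 + s" "s / real N \<le> \<mu> + 1 + s" "q * \<mu> \<le> \<mu> + 1 + s" "(1 - q) * \<mu> \<le> \<mu> + 1 + s"
    "0 \<le> q * \<mu>" "0 \<le> (1 - q) * \<mu>" "0 \<le> s / real N" using a b N1 assms by linarith+
  qed
  have "0 \<le> noise_rate N \<mu> q s e t r \<and> noise_rate N \<mu> q s e t r \<le> \<mu> + 1 + s"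
    unfolding noise_rate_def using X by (cases e) (auto simp: indicator_def)
  thus "0 \<le> noise_rate N \<mu> q s e t r" "noise_rate N \<mu> q s e t r \<le> \<mu> + 1 + s" by auto
qed

lemma sf_ll: "sigma_finite_measure (lborel \<Otimes>\<^sub>M lborel :: (real\<times>real) measure)"
  by (rule sigma_finite_pair_measure) (rule sigma_finite_lborel)+

lemma PM_box:
  assumes "finite E" "a \<le> b" "c \<le> d"
  shows "emeasure PM (E \<times> ({a..b} \<times> {c..d})) = of_nat (card E) * ennreal (b - a) * ennreal (d - c)"
proof -
  have "emeasure (lborel \<Otimes>\<^sub>M lborel) ({a..b} \<times> {c..d}) = ennreal (b - a) * ennreal (d - c)"
    using sigma_finite_measure.emeasure_pair_measure_Times[OF sigma_finite_lborel, of "{a..b}" lborel "{c..d}"]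
    using assms by simp
  moreover have "emeasure PM (E \<times> ({a..b} \<times> {c..d})) =
     emeasure (count_space UNIV) E * emeasure (lborel \<Otimes>\<^sub>M lborel) ({a..b} \<times> {c..d})"
    by (rule sigma_finite_measure.emeasure_pair_measure_Times[OF sf_ll]) auto
  ultimately show ?thesis using assms by (simp add: mult.assoc)
qed

lemma box_sets: "E \<times> ({a..b} \<times> {c..d}) \<in> sets PM"
  by (intro pair_measureI) auto

lemma nu_box_finite:
  assumes "0 \<le> q" "q \<le> 1" "0 < \<mu>" "0 < s" "0 < N" "finite E" "a \<le> b" "c \<le> d"
  shows "emeasure (noise_intensity N \<mu> q s) (E \<times> ({a..b} \<times> {c..d})) < \<infinity>"
proof -
  have "emeasure (noise_intensity N \<mu> q s) (E \<times> ({a..b} \<times> {c..d}))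
     \<le> (\<integral>\<^sup>+x. ennreal (\<mu> + 1 + s) * indicator (E \<times> ({a..b} \<times> {c..d})) x \<partial>PM)"
    unfolding emeasure_nu[OF box_sets]
    by (intro nn_integral_mono) (auto simp: indicator_def intro!: ennreal_leI nr_bounds[OF assms(1-5)])
  also have "\<dots> = ennreal (\<mu> + 1 + s) * (of_nat (card E) * ennreal (b - a) * ennreal (d - c))"
    by (subst nn_integral_cmult_indicator[OF box_sets]) (simp add: PM_box assms)
  also have "\<dots> < \<infinity>" by (simp add: ennreal_mult_less_top ennreal_of_nat_eq_real_of_nat flip: ennreal_mult)
  finally show ?thesis .
qed

lemma nu_down:
  assumes "0 \<le> q" "q \<le> 1" "0 < \<mu>" "0 < s" "0 < N"
  shows "emeasure (noise_intensity N \<mu> q s) (Down ` {..<N} \<times> ({0..1} \<times> {0..1})) \<le> ennreal (\<mu> * real N)"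
proof -
  have "emeasure (noise_intensity N \<mu> q s) (Down ` {..<N} \<times> ({0..1} \<times> {0..1}))
     \<le> (\<integral>\<^sup>+x. ennreal \<mu> * indicator (Down ` {..<N} \<times> ({0..1::real} \<times> {0..1::real})) x \<partial>PM)"
    unfolding emeasure_nu[OF box_sets]
  proof (intro nn_integral_mono)
    fix x :: "ev \<times> real \<times> real"
    show "ennreal (nr N \<mu> q s x) * indicator (Down ` {..<N} \<times> ({0..1} \<times> {0..1})) x
        \<le> ennreal \<mu> * indicator (Down ` {..<N} \<times> ({0..1::real} \<times> {0..1::real})) x"
    proof (cases "x \<in> Down ` {..<N} \<times> ({0..1} \<times> {0..1})")
      case True
      then obtain i t r where x: "x = (Down i, t, r)" "i < N" "0 \<le> t" "r \<in> {0..1}" by auto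
      have "nr N \<mu> q s x \<le> \<mu>" using x assms
        by (simp add: noise_rate_def mult_left_le_one_le)
      thus ?thesis using True by (simp add: ennreal_leI)
    qed simp
  qed
  also have "\<dots> = ennreal \<mu> * (of_nat N * ennreal 1 * ennreal 1)"
    by (subst nn_integral_cmult_indicator[OF box_sets]) (simp add: PM_box card_image inj_on_def)
  also have "\<dots> = ennreal (\<mu> * real N)" using assms by (simp add: ennreal_mult ennreal_of_nat_eq_real_of_nat)
  finally show ?thesis .
qed

definition Zset :: "nat \<Rightarrow> real \<Rightarrow> real \<Rightarrow> real \<Rightarrow> (ev \<times> real \<times> real) set" where
  "Zset N \<mu> q s = {x. nr N \<mu> q s x = 0}"

lemma Zset_sets: "Zset N \<mu> q s \<in> sets PM"
proof -
  have "Zset N \<mu> q s = (\<lambda>x. nr N \<mu> q s x) -` {0} \<inter> space PM" unfolding Zset_def by (auto simp: space_pair_measure)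
  moreover have "(\<lambda>x. nr N \<mu> q s x) -` {0} \<inter> space PM \<in> sets PM" by (rule measurable_sets[OF nr_meas]) simp
  ultimately show ?thesis by simp
qed

lemma nu_Zset: "emeasure (noise_intensity N \<mu> q s) (Zset N \<mu> q s) = 0"
  unfolding emeasure_nu[OF Zset_sets]
  by (rule nn_integral_zero') (auto simp: Zset_def indicator_def)



lemma poisson_null:
  assumes P: "poisson_rm M Pts \<nu>" and A: "A \<in> sets \<nu>" "emeasure \<nu> A = 0"
  shows "AE \<omega> in M. Pts \<omega> \<inter> A = {}"
proof -
  interpret prob_space M using P unfolding poisson_rm_def by blast
  have fin: "AE \<omega> in M. finite (Pts \<omega> \<inter> A)" and
    d: "measure M {\<omega> \<in> space M. card (Pts \<omega> \<inter> A) = 0} = measure \<nu> A ^ 0 / fact 0 * exp (- measure \<nu> A)"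
    using P A unfolding poisson_rm_def by auto
  have "measure \<nu> A = 0" using A(2) by (simp add: measure_def)
  hence "prob {\<omega> \<in> space M. card (Pts \<omega> \<inter> A) = 0} = 1" using d by simp
  hence "AE \<omega> in M. \<omega> \<in> {\<omega> \<in> space M. card (Pts \<omega> \<inter> A) = 0}" by (rule AE_prob_1)
  thus ?thesis using fin by eventually_elim auto
qed

lemma poisson_fin:
  assumes P: "poisson_rm M Pts \<nu>" and A: "A \<in> sets \<nu>" "emeasure \<nu> A < \<infinity>"
  shows "AE \<omega> in M. finite (Pts \<omega> \<inter> A)"
  using P A unfolding poisson_rm_def by auto

lemma poisson_meas:
  assumes P: "poisson_rm M Pts \<nu>" and A: "A \<in> sets \<nu>" "emeasure \<nu> A < \<infinity>"
  shows "(\<lambda>\<omega>. card (Pts \<omega> \<inter> A)) \<in> measurable M (count_space UNIV)"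
  using P A unfolding poisson_rm_def by auto

lemma exp_moment:
  assumes P: "poisson_rm M Pts \<nu>" and A: "A \<in> sets \<nu>" "emeasure \<nu> A < \<infinity>"
  shows "(\<integral>\<^sup>+\<omega>. ennreal (exp (c * real (card (Pts \<omega> \<inter> A)))) \<partial>M)
           = ennreal (exp (measure \<nu> A * (exp c - 1)))"
proof -
  interpret prob_space M using P unfolding poisson_rm_def by blast
  define l where "l = measure \<nu> A"
  define D where "D \<omega> = card (Pts \<omega> \<inter> A)" for \<omega>
  have Dm: "D \<in> measurable M (count_space UNIV)" unfolding D_def by (rule poisson_meas[OF P A])
  have dist: "measure M {\<omega> \<in> space M. D \<omega> = k} = l ^ k / fact k * exp (- l)" for k
    using P A unfolding poisson_rm_def D_def l_def by auto
  define Ak where "Ak k = {\<omega> \<in> space M. D \<omega> = k}" for k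
  have Aks: "Ak k \<in> sets M" for k
  proof -
    have "D -` {k} \<inter> space M \<in> sets M" by (rule measurable_sets[OF Dm]) simp
    moreover have "D -` {k} \<inter> space M = Ak k" unfolding Ak_def by auto
    ultimately show ?thesis by simp
  qed
  have eq: "ennreal (exp (c * real (D \<omega>))) = (\<Sum>k. ennreal (exp (c * real k)) * indicator (Ak k) \<omega>)"
    if "\<omega> \<in> space M" for \<omega>
  proof -
    have "(\<Sum>k. ennreal (exp (c * real k)) * indicator (Ak k) \<omega>)
        = (\<Sum>k\<in>{D \<omega>}. ennreal (exp (c * real k)) * indicator (Ak k) \<omega>)"
      by (rule suminf_finite) (auto simp: Ak_def)
    thus ?thesis using that by (simp add: Ak_def)
  qed
  have "(\<integral>\<^sup>+\<omega>. ennreal (exp (c * real (D \<omega>))) \<partial>M)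
      = (\<integral>\<^sup>+\<omega>. (\<Sum>k. ennreal (exp (c * real k)) * indicator (Ak k) \<omega>) \<partial>M)"
    by (rule nn_integral_cong) (simp add: eq)
  also have "\<dots> = (\<Sum>k. \<integral>\<^sup>+\<omega>. ennreal (exp (c * real k)) * indicator (Ak k) \<omega> \<partial>M)"
    by (rule nn_integral_suminf) (use Aks in auto)
  also have "\<dots> = (\<Sum>k. ennreal (exp (c * real k)) * emeasure M (Ak k))"
    by (simp add: nn_integral_cmult_indicator Aks)
  also have "\<dots> = (\<Sum>k. ennreal (exp (- l) * ((l * exp c) ^ k / fact k)))"
  proof (rule suminf_cong)
    fix k
    have pw: "exp (c * real k) * l ^ k = (l * exp c) ^ k"
      by (simp add: power_mult_distrib exp_of_nat_mult[symmetric] mult.commute)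
    have ar: "exp (c * real k) * (l ^ k / fact k * exp (- l)) = exp (- l) * ((l * exp c) ^ k / fact k)"
      using pw by (simp add: field_simps)
    have nn: "0 \<le> l ^ k / fact k * exp (- l)" by (simp add: l_def)
    have em: "emeasure M (Ak k) = ennreal (l ^ k / fact k * exp (- l))"
      using dist[of k] by (simp add: emeasure_eq_measure Ak_def)
    show "ennreal (exp (c * real k)) * emeasure M (Ak k) = ennreal (exp (- l) * ((l * exp c) ^ k / fact k))"
    proof -
      have "ennreal (exp (c * real k)) * ennreal (l ^ k / fact k * exp (- l)) = ennreal (exp (c * real k) * (l ^ k / fact k * exp (- l)))"
        by (rule ennreal_mult[symmetric]) (use nn in auto)
      thus ?thesis unfolding em ar .
    qed
  qed
  also have "\<dots> = ennreal (exp (- l) * exp (l * exp c))"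
  proof -
    have s: "(\<lambda>k. exp (- l) * ((l * exp c) ^ k / fact k)) sums (exp (- l) * exp (l * exp c))"
      using sums_mult[OF exp_converges[of "l * exp c"], of "exp (- l)"] by (simp add: divide_inverse mult.commute)
    show ?thesis
      by (subst suminf_ennreal2) (use s in \<open>auto simp: sums_iff l_def\<close>)
  qed
  also have "exp (- l) * exp (l * exp c) = exp (l * (exp c - 1))"
    by (simp add: exp_add[symmetric] algebra_simps)
  finally show ?thesis unfolding D_def l_def .
qed

lemma z_le: fixes z a :: real assumes "0 \<le> z" "0 < a" shows "z \<le> 2 * exp z / a + a"
proof (cases "z \<le> a")
  case True
  have "0 \<le> 2 * exp z / a" using assms by simp
  thus ?thesis using True by linarith
next
  case False
  have "z\<^sup>2 \<le> 2 * exp z" using exp_lower_Taylor_quadratic[OF assms(1)] assms(1) by simp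
  moreover have "z * a \<le> z\<^sup>2" using False assms by (simp add: power2_eq_square mult_left_mono)
  ultimately have "z * a \<le> 2 * exp z" by linarith
  hence "z \<le> 2 * exp z / a" using assms by (simp add: field_simps)
  thus ?thesis using assms by linarith
qed

lemma int_bound:
  fixes D :: "'w \<Rightarrow> nat"
  assumes "prob_space M" and Bs: "B \<in> sets M" and Bm: "measure M B \<le> e" and e: "0 \<le> e"
    and Dm: "D \<in> measurable M (count_space UNIV)"
    and mom: "(\<integral>\<^sup>+\<omega>. ennreal (exp (real (D \<omega>) / real N)) \<partial>M) \<le> ennreal K"
    and N: "0 < N" and sp: "0 \<le> sp" and K: "0 < K"
  shows "(\<integral>\<^sup>+\<omega>. ennreal ((sp + real (D \<omega>)) * indicator B \<omega>) \<partial>M)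
           \<le> ennreal (sp * e + 2 * real N * sqrt (2 * K) * sqrt e)"
proof -
  interpret prob_space M by fact
  show ?thesis
  proof (cases "e = 0")
    case True
    hence "emeasure M B = 0" using Bm measure_nonneg[of M B] by (simp add: emeasure_eq_measure)
    hence "AE \<omega> in M. \<omega> \<notin> B" using Bs by (intro AE_not_in null_setsI)
    hence "(\<integral>\<^sup>+\<omega>. ennreal ((sp + real (D \<omega>)) * indicator B \<omega>) \<partial>M) = (\<integral>\<^sup>+\<omega>. 0 \<partial>M)"
      by (intro nn_integral_cong_AE) (auto elim!: eventually_mono)
    thus ?thesis by simp
  next
    case False
    hence epos: "0 < e" using e by simp
    define a where "a = sqrt (2 * K) / sqrt e"
    have apos: "0 < a" unfolding a_def using K epos by simp
    have Dr: "(\<lambda>\<omega>. real (D \<omega>)) \<in> borel_measurable M"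
      using measurable_compose[OF Dm, of "\<lambda>k. real k" borel] by simp
    have pw: "ennreal ((sp + real (D \<omega>)) * indicator B \<omega>)
        \<le> ennreal (2 * real N / a) * ennreal (exp (real (D \<omega>) / real N)) + ennreal (sp + real N * a) * indicator B \<omega>" for \<omega>
    proof -
      have z: "real (D \<omega>) / real N \<le> 2 * exp (real (D \<omega>) / real N) / a + a"
        by (rule z_le) (use apos in auto)
      hence z': "real (D \<omega>) \<le> real N * (2 * exp (real (D \<omega>) / real N) / a + a)"
        using N by (simp add: field_simps)
      have nn: "0 \<le> 2 * real N / a * exp (real (D \<omega>) / real N)" using apos by simp
      have "(sp + real (D \<omega>)) * indicator B \<omega>
          \<le> 2 * real N / a * exp (real (D \<omega>) / real N) + (sp + real N * a) * indicator B \<omega>"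
        using z' nn by (cases "\<omega> \<in> B") (auto simp: field_simps)
      hence "ennreal ((sp + real (D \<omega>)) * indicator B \<omega>)
          \<le> ennreal (2 * real N / a * exp (real (D \<omega>) / real N) + (sp + real N * a) * indicator B \<omega>)"
        by (rule ennreal_leI)
      also have "\<dots> = ennreal (2 * real N / a) * ennreal (exp (real (D \<omega>) / real N)) + ennreal (sp + real N * a) * indicator B \<omega>"
      proof -
        let ?z = "exp (real (D \<omega>) / real N)"
        have e1: "ennreal (2 * real N / a * ?z) = ennreal (2 * real N / a) * ennreal ?z"
          by (rule ennreal_mult) (use apos in auto)
        have e2: "ennreal ((sp + real N * a) * indicator B \<omega>) = ennreal (sp + real N * a) * indicator B \<omega>"
          by (cases "\<omega> \<in> B") auto
        have e3: "ennreal (2 * real N / a * ?z + (sp + real N * a) * indicator B \<omega>)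
            = ennreal (2 * real N / a * ?z) + ennreal ((sp + real N * a) * indicator B \<omega>)"
          by (rule ennreal_plus) (use apos sp in auto)
        show ?thesis unfolding e3 e1 e2 ..
      qed
      finally show ?thesis .
    qed
    have "(\<integral>\<^sup>+\<omega>. ennreal ((sp + real (D \<omega>)) * indicator B \<omega>) \<partial>M)
        \<le> (\<integral>\<^sup>+\<omega>. ennreal (2 * real N / a) * ennreal (exp (real (D \<omega>) / real N)) + ennreal (sp + real N * a) * indicator B \<omega> \<partial>M)"
      by (rule nn_integral_mono) (rule pw)
    also have "\<dots> = ennreal (2 * real N / a) * (\<integral>\<^sup>+\<omega>. ennreal (exp (real (D \<omega>) / real N)) \<partial>M)
                    + ennreal (sp + real N * a) * emeasure M B"
      using Dr Bs by (simp add: nn_integral_add nn_integral_cmult nn_integral_cmult_indicator)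
    also have "\<dots> \<le> ennreal (2 * real N / a) * ennreal K + ennreal (sp + real N * a) * ennreal e"
      using mom Bm by (intro add_mono mult_left_mono) (auto simp: emeasure_eq_measure intro: ennreal_leI)
    also have "\<dots> = ennreal (2 * real N / a * K + (sp + real N * a) * e)"
    proof -
      have f1: "ennreal (2 * real N / a) * ennreal K = ennreal (2 * real N / a * K)"
        by (rule ennreal_mult[symmetric]) (use apos K in auto)
      have f2: "ennreal (sp + real N * a) * ennreal e = ennreal ((sp + real N * a) * e)"
        by (rule ennreal_mult[symmetric]) (use apos sp e in auto)
      have f3: "ennreal (2 * real N / a * K + (sp + real N * a) * e) = ennreal (2 * real N / a * K) + ennreal ((sp + real N * a) * e)"
        by (rule ennreal_plus) (use apos sp e K in auto)
      show ?thesis unfolding f1 f2 f3 ..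
    qed
    also have "2 * real N / a * K + (sp + real N * a) * e = sp * e + 2 * real N * sqrt (2 * K) * sqrt e"
    proof -
      have s2: "sqrt (2 * K) * sqrt (2 * K) = 2 * K" using K by simp
      have se: "sqrt e * sqrt e = e" using e by simp
      have "2 * real N / a * K = real N * sqrt (2 * K) * sqrt e"
        unfolding a_def using K epos s2 by (simp add: field_simps)
      moreover have "real N * a * e = real N * sqrt (2 * K) * sqrt e"
        unfolding a_def using epos se by (simp add: field_simps)
      ultimately show ?thesis by (simp add: algebra_simps)
    qed
    finally show ?thesis .
  qed
qed



lemma nr_nonzero:
  assumes "noise_rate N \<mu> q s e t r \<noteq> 0"
  shows "valid N e \<and> 0 \<le> t \<and> 0 \<le> r \<and> (\<not> isSel e \<longrightarrow> r \<le> 1)"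
  using assms by (cases e) (auto simp: noise_rate_def valid_def isSel_def indicator_def split: if_splits)

lemma valid_finite: "finite {e. valid N e}"
proof -
  have "{e. valid N e} \<subseteq> Up ` {..<N} \<union> Down ` {..<N} \<union> (\<lambda>(i,j). Res i j) ` ({..<N} \<times> {..<N})
      \<union> (\<lambda>(i,j). Sel i j) ` ({..<N} \<times> {..<N})"
  proof
    fix e assume "e \<in> {e. valid N e}"
    thus "e \<in> Up ` {..<N} \<union> Down ` {..<N} \<union> (\<lambda>(i,j). Res i j) ` ({..<N} \<times> {..<N})
      \<union> (\<lambda>(i,j). Sel i j) ` ({..<N} \<times> {..<N})"
      by (cases e) (auto simp: valid_def)
  qed
  thus ?thesis by (rule finite_subset) auto
qed

lemma exp_inv_bound:
  assumes "2 \<le> N"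
  shows "exp (1 / real N) - 1 \<le> 2 / real N"
proof -
  define x where "x = 1 / real N"
  have x: "0 \<le> x" "x \<le> 1/2" unfolding x_def using assms by (auto simp: field_simps)
  have "1 - x \<le> exp (- x)" using exp_ge_add_one_self[of "-x"] by simp
  hence "(1 - x) * exp x \<le> exp (- x) * exp x" by (simp add: mult_right_mono)
  hence a: "(1 - x) * exp x \<le> 1" by (simp add: exp_minus field_simps)
  have h: "1/2 * exp x \<le> (1 - x) * exp x" using x by (intro mult_right_mono) auto
  hence e2: "exp x \<le> 2" using a by linarith
  have "exp x - 1 \<le> x * exp x" using a by (simp add: algebra_simps)
  moreover have "x * exp x \<le> x * 2" using e2 x by (intro mult_left_mono) auto
  ultimately show ?thesis unfolding x_def by simp
qed

lemma ln_sq_bound: fixes x :: real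
  assumes "256 \<le> x"
  shows "(ln x)^2 < x"
proof -
  have x1: "1 \<le> x" using assms by simp
  have "ln x = 4 * ln (sqrt (sqrt x))" using x1 by (simp add: ln_sqrt)
  also have "ln (sqrt (sqrt x)) < sqrt (sqrt x)"
    using x1 ln_le_minus_one[of "sqrt (sqrt x)"] by simp
  finally have l: "ln x < 4 * sqrt (sqrt x)" by simp
  have l0: "0 \<le> ln x" using x1 by simp
  have "(ln x)^2 < (4 * sqrt (sqrt x))^2" using l l0 by (intro power_strict_mono) auto
  also have "\<dots> = 16 * sqrt x" using x1 by (simp add: power_mult_distrib)
  also have "16 * sqrt x \<le> sqrt x * sqrt x"
  proof -
    have "16 \<le> sqrt x" using assms real_sqrt_le_mono[of 256 x] by simp
    thus ?thesis using x1 by (intro mult_right_mono) auto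
  qed
  also have "sqrt x * sqrt x = x" using x1 by simp
  finally show ?thesis .
qed

lemma emp_sum: "sum_mset (image_mset f (emp N y)) = (\<Sum>i<N. f (y i))"
  by (simp add: emp_def sum_unfold_sum_mset image_mset.compositionality comp_def)

lemma spread_c2:
  assumes N: "0 < N"
  shows "hi N x0 - lo N x0 \<le> 2 * sqrt (c2 (emp N x0) * real N ^ 3)"
proof -
  let ?p = "emp N x0"
  let ?m = "mean ?p"
  have Nc2: "real N * c2 ?p = (\<Sum>i<N. (x0 i - ?m)^2)"
    unfolding c2_def emp_size emp_sum using N by simp
  have c2nn: "0 \<le> c2 ?p" unfolding c2_def emp_size emp_sum by (simp add: sum_nonneg)
  have dev: "\<bar>x0 j - ?m\<bar> \<le> sqrt (real N * c2 ?p)" if j: "j < N" for j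
  proof -
    have "(x0 j - ?m)^2 \<le> (\<Sum>i<N. (x0 i - ?m)^2)"
      using j by (intro member_le_sum) auto
    hence "sqrt ((x0 j - ?m)^2) \<le> sqrt (real N * c2 ?p)" unfolding Nc2 by (rule real_sqrt_le_mono)
    thus ?thesis by simp
  qed
  have "hi N x0 \<in> x0 ` {..<N}" "lo N x0 \<in> x0 ` {..<N}" unfolding hi_def lo_def using N by (auto intro!: Max_in Min_in)
  then obtain a b where ab: "a < N" "b < N" "hi N x0 = x0 a" "lo N x0 = x0 b" by auto
  have "hi N x0 - lo N x0 \<le> \<bar>x0 a - ?m\<bar> + \<bar>x0 b - ?m\<bar>" using ab by simp
  also have "\<dots> \<le> 2 * sqrt (real N * c2 ?p)" using dev[OF ab(1)] dev[OF ab(2)] by simp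
  also have "sqrt (real N * c2 ?p) \<le> sqrt (c2 ?p * real N ^ 3)"
  proof (rule real_sqrt_le_mono)
    have "1 \<le> real N" using N by simp
    hence "1 * 1 \<le> real N * real N" by (intro mult_mono) auto
    hence "real N * 1 \<le> real N * (real N * real N)" using N by (intro mult_left_mono) auto
    hence "real N \<le> real N ^ 3" by (simp add: power3_eq_cube)
    have h: "real N * c2 ?p \<le> real N ^ 3 * c2 ?p" by (rule mult_right_mono[OF \<open>real N \<le> real N ^ 3\<close> c2nn])
    thus "real N * c2 ?p \<le> c2 ?p * real N ^ 3" by (metis mult.commute)
  qed
  finally show ?thesis by simp
qed

lemma hilo_int:
  assumes N: "0 < N" and lat: "\<forall>i<N. x0 i - l \<in> \<int>"
  shows "hi N x0 - lo N x0 \<in> \<int>"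
proof -
  have "hi N x0 \<in> x0 ` {..<N}" "lo N x0 \<in> x0 ` {..<N}" unfolding hi_def lo_def using N by (auto intro!: Max_in Min_in)
  then obtain a b where ab: "a < N" "b < N" "hi N x0 = x0 a" "lo N x0 = x0 b" by auto
  have "hi N x0 - lo N x0 = (x0 a - l) - (x0 b - l)" using ab by simp
  thus ?thesis using lat ab by (metis Ints_diff)
qed

lemma pointwise_bounds:
  fixes P :: "(ev\<times>real\<times>real) set" and x0 :: "nat \<Rightarrow> real"
  assumes N: "256 \<le> N"
    and V: "\<forall>x\<in>P. valid N (fst x) \<and> 0 \<le> fst (snd x) \<and> 0 \<le> snd (snd x) \<and> (\<not> isSel (fst x) \<longrightarrow> snd (snd x) \<le> 1)"
    and Fin: "\<And>T R::nat. finite (P \<inter> {x. fst (snd x) \<le> real T \<and> snd (snd x) \<le> real R})"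
    and lat: "\<forall>i<N. x0 i - l \<in> \<int>"
    and Wdef: "W = hi N x0 - lo N x0 + real (card (P \<inter> {x. isDown (fst x) \<and> fst (snd x) \<le> 1}))"
  shows "- W \<le> (INF t\<in>{0..1}. Min ((\<lambda>i. moran_path sel P x0 t i - x0 i) ` {..<N}))"
    and "- W \<le> (INF t\<in>{0..1}. kc (emp N (moran_path sel P x0 t)) - kc (emp N x0))"
proof -
  have N0: "0 < N" using N by simp
  have dm: "\<forall>t\<in>{0..1}. \<forall>i<N. - W \<le> moran_path sel P x0 t i - x0 i \<and> moran_path sel P x0 t i - l \<in> \<int>"
    using det_main[OF N0 V Fin lat, of sel] unfolding Wdef by blast
  show "- W \<le> (INF t\<in>{0..1}. Min ((\<lambda>i. moran_path sel P x0 t i - x0 i) ` {..<N}))"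
  proof (rule cINF_greatest)
    fix t :: real assume t: "t \<in> {0..1}"
    show "- W \<le> Min ((\<lambda>i. moran_path sel P x0 t i - x0 i) ` {..<N})"
      using dm t N0 by (subst Min_ge_iff) auto
  qed simp
  have Wint: "W \<in> \<int>" unfolding Wdef using hilo_int[OF N0 lat] by (intro Ints_add) auto
  have L: "(ln (real N))^2 < real N" using ln_sq_bound[of "real N"] N by simp
  show "- W \<le> (INF t\<in>{0..1}. kc (emp N (moran_path sel P x0 t)) - kc (emp N x0))"
  proof (rule cINF_greatest)
    fix t :: real assume t: "t \<in> {0..1}"
    have "kc (emp N x0) - W \<le> kc (emp N (moran_path sel P x0 t))"
    proof (rule kc_bound[OF N0 L lat _ Wint])
      show "\<forall>i<N. moran_path sel P x0 t i - l \<in> \<int>" using dm t by blast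
      show "\<forall>i<N. x0 i - W \<le> moran_path sel P x0 t i" using dm t by force
    qed
    thus "- W \<le> kc (emp N (moran_path sel P x0 t)) - kc (emp N x0)" by simp
  qed simp
qed

lemma neg_ind: "- a \<le> w \<Longrightarrow> ennreal (- a * indicator B x) \<le> ennreal (w * indicator B x)"
  by (cases "x \<in> B") (auto intro: ennreal_leI)

lemma main_N:
  fixes M :: "'w measure" and Pts :: "'w \<Rightarrow> (ev\<times>real\<times>real) set" and x0 :: "nat \<Rightarrow> real"
  assumes mu: "0 < \<mu>" and q: "0 \<le> q" "q \<le> 1" and s: "0 < s"
    and Pois: "poisson_rm M Pts (noise_intensity N \<mu> q s)"
    and N: "256 \<le> N"
    and pS: "emp N x0 \<in> Sbar N"
    and Bs: "B \<in> noise_F1 M Pts (noise_intensity N \<mu> q s)"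
    and Bm: "measure M B \<le> e" and e1: "e \<le> 1"
  shows "(\<integral>\<^sup>+\<omega>. ennreal (- (INF t\<in>{0..1}. Min ((\<lambda>i. moran_path sel (Pts \<omega>) x0 t i - x0 i) ` {..<N}))
                         * indicator B \<omega>) \<partial>M)
            \<le> ennreal ((2 + 2 * sqrt (2 * exp (2 * \<mu>))) * (sqrt (c2 (emp N x0) * real N ^ 3) + real N ^ 2) * sqrt e) \<and>
          (\<integral>\<^sup>+\<omega>. ennreal (- (INF t\<in>{0..1}. kc (emp N (moran_path sel (Pts \<omega>) x0 t)) - kc (emp N x0))
                         * indicator B \<omega>) \<partial>M)
            \<le> ennreal ((2 + 2 * sqrt (2 * exp (2 * \<mu>))) * (sqrt (c2 (emp N x0) * real N ^ 3) + real N ^ 2) * sqrt e)"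
proof -
  let ?\<nu> = "noise_intensity N \<mu> q s"
  interpret prob_space M using Pois unfolding poisson_rm_def by blast
  have N0: "0 < N" "2 \<le> N" using N by auto
  have e0: "0 \<le> e" using Bm measure_nonneg[of M B] by linarith
  have Bsets: "B \<in> sets M"
  proof -
    have "noise_F1 M Pts ?\<nu> \<subseteq> sets M" unfolding noise_F1_def
    proof (rule sets.sigma_sets_subset, safe)
      fix A :: "(ev\<times>real\<times>real) set" and n :: nat
      assume A: "A \<in> sets ?\<nu>" "emeasure ?\<nu> A < \<infinity>"
      have m: "(\<lambda>\<omega>. card (Pts \<omega> \<inter> A)) \<in> measurable M (count_space UNIV)" by (rule poisson_meas[OF Pois A])
      have "(\<lambda>\<omega>. card (Pts \<omega> \<inter> A)) -` {n} \<inter> space M \<in> sets M" by (rule measurable_sets[OF m]) simp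
      moreover have "(\<lambda>\<omega>. card (Pts \<omega> \<inter> A)) -` {n} \<inter> space M = {\<omega> \<in> space M. card (Pts \<omega> \<inter> A) = n}" by auto
      ultimately show "{\<omega> \<in> space M. card (Pts \<omega> \<inter> A) = n} \<in> sets M" by simp
    qed
    thus ?thesis using Bs by blast
  qed
  obtain l where l: "\<forall>k\<in>#emp N x0. k - l \<in> \<int>" using pS unfolding Sbar_def by auto
  have lat: "\<forall>i<N. x0 i - l \<in> \<int>" using l emp_mem by blast
  define Z where "Z = Zset N \<mu> q s"
  define Box where "Box T R = {e. valid N e} \<times> ({0..real T} \<times> {0..real R})" for T R :: nat
  define DB where "DB = Down ` {..<N} \<times> ({0..1::real} \<times> {0..1::real})"
  have Zs: "Z \<in> sets ?\<nu>" unfolding Z_def sets_nu by (rule Zset_sets)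
  have AE1: "AE \<omega> in M. Pts \<omega> \<inter> Z = {}"
    by (rule poisson_null[OF Pois Zs]) (simp add: Z_def nu_Zset)
  have Boxs: "Box T R \<in> sets ?\<nu>" for T R unfolding Box_def sets_nu by (rule box_sets)
  have Boxf: "emeasure ?\<nu> (Box T R) < \<infinity>" for T R
    unfolding Box_def by (rule nu_box_finite[OF q mu s N0(1) valid_finite]) auto
  have AE2: "AE \<omega> in M. \<forall>T R. finite (Pts \<omega> \<inter> Box T R)"
    by (intro AE_all_countable[THEN iffD2] allI poisson_fin[OF Pois Boxs Boxf])
  have DBs: "DB \<in> sets ?\<nu>" unfolding DB_def sets_nu by (rule box_sets)
  have DBle: "emeasure ?\<nu> DB \<le> ennreal (\<mu> * real N)" unfolding DB_def by (rule nu_down[OF q mu s N0(1)])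
  have DBf: "emeasure ?\<nu> DB < \<infinity>" using DBle by (simp add: le_less_trans)
  define D where "D \<omega> = card (Pts \<omega> \<inter> DB)" for \<omega>
  have Dm: "D \<in> measurable M (count_space UNIV)" unfolding D_def by (rule poisson_meas[OF Pois DBs DBf])
  define K where "K = exp (2 * \<mu>)"
  have mom: "(\<integral>\<^sup>+\<omega>. ennreal (exp (real (D \<omega>) / real N)) \<partial>M) \<le> ennreal K"
  proof -
    have eq: "(\<integral>\<^sup>+\<omega>. ennreal (exp (1 / real N * real (D \<omega>))) \<partial>M) = ennreal (exp (measure ?\<nu> DB * (exp (1 / real N) - 1)))"
      unfolding D_def by (rule exp_moment[OF Pois DBs DBf])
    have lam: "measure ?\<nu> DB \<le> \<mu> * real N"
    proof -
      have "enn2real (emeasure ?\<nu> DB) \<le> enn2real (ennreal (\<mu> * real N))"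
        by (rule enn2real_mono[OF DBle]) simp
      thus ?thesis using mu by (simp add: measure_def)
    qed
    have lam0: "0 \<le> measure ?\<nu> DB" by simp
    have x: "0 \<le> exp (1 / real N) - 1" "exp (1 / real N) - 1 \<le> 2 / real N"
      using exp_inv_bound[OF N0(2)] by auto
    have "measure ?\<nu> DB * (exp (1 / real N) - 1) \<le> (\<mu> * real N) * (2 / real N)"
      by (rule mult_mono[OF lam x(2)]) (use mu x(1) in auto)
    also have "\<dots> = 2 * \<mu>" using N0 by simp
    finally have "exp (measure ?\<nu> DB * (exp (1 / real N) - 1)) \<le> K" unfolding K_def by simp
    hence "ennreal (exp (measure ?\<nu> DB * (exp (1 / real N) - 1))) \<le> ennreal K" by (rule ennreal_leI)
    moreover have "(\<lambda>\<omega>. exp (real (D \<omega>) / real N)) = (\<lambda>\<omega>. exp (1 / real N * real (D \<omega>)))" by (simp add: field_simps)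
    ultimately show ?thesis using eq by simp
  qed
  define sp where "sp = hi N x0 - lo N x0"
  have sp0: "0 \<le> sp" unfolding sp_def using lo_le[OF N0(1), of x0] hi_ge[OF N0(1), of x0] by linarith
  have IB: "(\<integral>\<^sup>+\<omega>. ennreal ((sp + real (D \<omega>)) * indicator B \<omega>) \<partial>M)
           \<le> ennreal (sp * e + 2 * real N * sqrt (2 * K) * sqrt e)"
    by (rule int_bound[OF prob_space_axioms Bsets Bm e0 Dm mom N0(1) sp0]) (simp add: K_def)
  let ?C = "2 + 2 * sqrt (2 * exp (2 * \<mu>))"
  have num: "sp * e + 2 * real N * sqrt (2 * K) * sqrt e \<le> ?C * (sqrt (c2 (emp N x0) * real N ^ 3) + real N ^ 2) * sqrt e"
  proof -
    have se: "e \<le> sqrt e"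
    proof -
      have s1: "sqrt e \<le> 1" using e1 by simp
      have "sqrt e * sqrt e \<le> sqrt e * 1" using s1 e0 by (intro mult_left_mono) auto
      thus ?thesis using e0 by simp
    qed
    have c2nn: "0 \<le> c2 (emp N x0)" unfolding c2_def emp_size emp_sum by (simp add: sum_nonneg)
    have sp2: "sp \<le> 2 * sqrt (c2 (emp N x0) * real N ^ 3)" unfolding sp_def by (rule spread_c2[OF N0(1)])
    have a1: "sp * e \<le> 2 * sqrt (c2 (emp N x0) * real N ^ 3) * sqrt e"
      by (rule mult_mono[OF sp2 se]) (use sp0 e0 c2nn in auto)
    have NN: "real N \<le> real N ^ 2" using N0 by (simp add: power2_eq_square)
    have a2: "2 * real N * sqrt (2 * K) * sqrt e \<le> 2 * sqrt (2 * K) * real N ^ 2 * sqrt e"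
    proof -
      have "2 * sqrt (2 * K) * real N \<le> 2 * sqrt (2 * K) * real N ^ 2" using NN by (intro mult_left_mono) (auto simp: K_def)
      thus ?thesis using e0 by (intro mult_right_mono) (auto simp: algebra_simps)
    qed
    have b: "0 \<le> sqrt (c2 (emp N x0) * real N ^ 3) * sqrt e" "0 \<le> sqrt (2 * K) * sqrt (c2 (emp N x0) * real N ^ 3) * sqrt e"
       "0 \<le> real N ^ 2 * sqrt e"
      using c2nn e0 by (simp_all add: K_def)
    have "?C * (sqrt (c2 (emp N x0) * real N ^ 3) + real N ^ 2) * sqrt e
        = 2 * sqrt (c2 (emp N x0) * real N ^ 3) * sqrt e + 2 * sqrt (2 * K) * real N ^ 2 * sqrt e
          + (2 * sqrt (2 * K) * sqrt (c2 (emp N x0) * real N ^ 3) * sqrt e + 2 * real N ^ 2 * sqrt e)"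
      unfolding K_def by (simp add: algebra_simps)
    thus ?thesis using a1 a2 b by linarith
  qed
  have final: "(\<integral>\<^sup>+\<omega>. ennreal ((sp + real (D \<omega>)) * indicator B \<omega>) \<partial>M)
           \<le> ennreal (?C * (sqrt (c2 (emp N x0) * real N ^ 3) + real N ^ 2) * sqrt e)"
    using IB ennreal_leI[OF num] by (rule order_trans)
  have good: "AE \<omega> in M. (- (INF t\<in>{0..1}. Min ((\<lambda>i. moran_path sel (Pts \<omega>) x0 t i - x0 i) ` {..<N})) \<le> sp + real (D \<omega>))
       \<and> (- (INF t\<in>{0..1}. kc (emp N (moran_path sel (Pts \<omega>) x0 t)) - kc (emp N x0)) \<le> sp + real (D \<omega>))"
    using AE1 AE2
  proof eventually_elim
    case (elim \<omega>)
    let ?P = "Pts \<omega>"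
    have V: "\<forall>x\<in>?P. valid N (fst x) \<and> 0 \<le> fst (snd x) \<and> 0 \<le> snd (snd x) \<and> (\<not> isSel (fst x) \<longrightarrow> snd (snd x) \<le> 1)"
    proof
      fix x assume x: "x \<in> ?P"
      hence "x \<notin> Z" using elim(1) by blast
      hence "nr N \<mu> q s x \<noteq> 0" unfolding Z_def Zset_def by simp
      thus "valid N (fst x) \<and> 0 \<le> fst (snd x) \<and> 0 \<le> snd (snd x) \<and> (\<not> isSel (fst x) \<longrightarrow> snd (snd x) \<le> 1)"
        by (rule nr_nonzero)
    qed
    have Fin: "finite (?P \<inter> {x. fst (snd x) \<le> real T \<and> snd (snd x) \<le> real R})" for T R :: nat
    proof (rule finite_subset[OF _ elim(2)[rule_format, of T R]])
      show "?P \<inter> {x. fst (snd x) \<le> real T \<and> snd (snd x) \<le> real R} \<subseteq> ?P \<inter> Box T R"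
        using V unfolding Box_def by force
    qed
    have Deq: "?P \<inter> {x. isDown (fst x) \<and> fst (snd x) \<le> 1} = ?P \<inter> DB"
    proof
      show "?P \<inter> {x. isDown (fst x) \<and> fst (snd x) \<le> 1} \<subseteq> ?P \<inter> DB"
      proof
        fix x assume x: "x \<in> ?P \<inter> {x. isDown (fst x) \<and> fst (snd x) \<le> 1}"
        obtain e t r where xe: "x = (e,t,r)" by (cases x)
        have Vx: "valid N e" "0 \<le> t" "0 \<le> r" "\<not> isSel e \<longrightarrow> r \<le> 1" using V x xe by auto
        obtain i where i: "e = Down i" using x xe by (cases e) (auto simp: isDown_def)
        show "x \<in> ?P \<inter> DB" using x xe Vx i by (auto simp: DB_def valid_def isSel_def)
      qed
      show "?P \<inter> DB \<subseteq> ?P \<inter> {x. isDown (fst x) \<and> fst (snd x) \<le> 1}"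
        by (auto simp: DB_def isDown_def)
    qed
    have W: "sp + real (D \<omega>) = hi N x0 - lo N x0 + real (card (?P \<inter> {x. isDown (fst x) \<and> fst (snd x) \<le> 1}))"
      unfolding Deq D_def sp_def ..
    show ?case using pointwise_bounds[OF N V Fin lat W, of sel] by linarith
  qed
  have int1: "(\<integral>\<^sup>+\<omega>. ennreal (- (INF t\<in>{0..1}. Min ((\<lambda>i. moran_path sel (Pts \<omega>) x0 t i - x0 i) ` {..<N})) * indicator B \<omega>) \<partial>M)
      \<le> (\<integral>\<^sup>+\<omega>. ennreal ((sp + real (D \<omega>)) * indicator B \<omega>) \<partial>M)"
    apply (rule nn_integral_mono_AE) using good apply eventually_elim apply (rule neg_ind) apply blast done
  have int2: "(\<integral>\<^sup>+\<omega>. ennreal (- (INF t\<in>{0..1}. kc (emp N (moran_path sel (Pts \<omega>) x0 t)) - kc (emp N x0)) * indicator B \<omega>) \<partial>M)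
      \<le> (\<integral>\<^sup>+\<omega>. ennreal ((sp + real (D \<omega>)) * indicator B \<omega>) \<partial>M)"
    apply (rule nn_integral_mono_AE) using good apply eventually_elim apply (rule neg_ind) apply blast done
  show ?thesis using order_trans[OF int1 final] order_trans[OF int2 final] by blast
qed



theorem lemma4p3:
  fixes \<mu> :: real
  assumes "\<mu> > 0"
  shows "\<exists>C>0. \<forall>(q::real) (s::real) (M :: nat \<Rightarrow> 'w measure) Pts A B (\<epsilon> :: nat \<Rightarrow> real).
    0 \<le> q \<longrightarrow> q \<le> 1 \<longrightarrow> s > 0 \<longrightarrow>
    (\<forall>N. poisson_rm (M N) (Pts N) (noise_intensity N \<mu> q s)) \<longrightarrow>
    (\<forall>N. A N \<subseteq> Sbar N) \<longrightarrow>
    (\<forall>N. \<forall>p \<in> A N. B N p \<in> noise_F1 (M N) (Pts N) (noise_intensity N \<mu> q s) \<and>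
                    measure (M N) (B N p) \<le> \<epsilon> N) \<longrightarrow>
    \<epsilon> \<longlonglongrightarrow> 0 \<longrightarrow>
    (\<exists>N0. \<forall>N \<ge> N0. \<forall>p \<in> A N. \<forall>x0. emp N x0 = p \<longrightarrow>
       (\<forall>sel \<in> {True, False}.
          (\<integral>\<^sup>+\<omega>. ennreal (- (INF t\<in>{0..1}. Min ((\<lambda>i. moran_path sel (Pts N \<omega>) x0 t i - x0 i) ` {..<N}))
                         * indicator (B N p) \<omega>) \<partial>M N)
            \<le> ennreal (C * (sqrt (c2 p * real N ^ 3) + real N ^ 2) * sqrt (\<epsilon> N)) \<and>
          (\<integral>\<^sup>+\<omega>. ennreal (- (INF t\<in>{0..1}. kc (emp N (moran_path sel (Pts N \<omega>) x0 t)) - kc p)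
                         * indicator (B N p) \<omega>) \<partial>M N)
            \<le> ennreal (C * (sqrt (c2 p * real N ^ 3) + real N ^ 2) * sqrt (\<epsilon> N))))"
proof -
  let ?C = "2 + 2 * sqrt (2 * exp (2 * \<mu>))"
  have Cpos: "?C > 0" by (simp add: add_pos_nonneg)
  show ?thesis
  proof (intro exI[of _ ?C] conjI Cpos allI impI)
    fix q s :: real and M :: "nat \<Rightarrow> 'w measure" and Pts :: "nat \<Rightarrow> 'w \<Rightarrow> (ev \<times> real \<times> real) set"
      and A :: "nat \<Rightarrow> real multiset set" and B :: "nat \<Rightarrow> real multiset \<Rightarrow> 'w set" and \<epsilon> :: "nat \<Rightarrow> real"
    assume q0: "0 \<le> q" and q1: "q \<le> 1" and s0: "s > 0"
      and Pois: "\<forall>N. poisson_rm (M N) (Pts N) (noise_intensity N \<mu> q s)"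
      and Asub: "\<forall>N. A N \<subseteq> Sbar N"
      and Bh: "\<forall>N. \<forall>p \<in> A N. B N p \<in> noise_F1 (M N) (Pts N) (noise_intensity N \<mu> q s) \<and>
                    measure (M N) (B N p) \<le> \<epsilon> N"
      and lim: "\<epsilon> \<longlonglongrightarrow> 0"
    obtain N1 where N1: "\<forall>n\<ge>N1. norm (\<epsilon> n - 0) < 1" using LIMSEQ_D[OF lim, of 1] by auto
    show "\<exists>N0. \<forall>N \<ge> N0. \<forall>p \<in> A N. \<forall>x0. emp N x0 = p \<longrightarrow>
       (\<forall>sel \<in> {True, False}.
          (\<integral>\<^sup>+\<omega>. ennreal (- (INF t\<in>{0..1}. Min ((\<lambda>i. moran_path sel (Pts N \<omega>) x0 t i - x0 i) ` {..<N}))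
                         * indicator (B N p) \<omega>) \<partial>M N)
            \<le> ennreal (?C * (sqrt (c2 p * real N ^ 3) + real N ^ 2) * sqrt (\<epsilon> N)) \<and>
          (\<integral>\<^sup>+\<omega>. ennreal (- (INF t\<in>{0..1}. kc (emp N (moran_path sel (Pts N \<omega>) x0 t)) - kc p)
                         * indicator (B N p) \<omega>) \<partial>M N)
            \<le> ennreal (?C * (sqrt (c2 p * real N ^ 3) + real N ^ 2) * sqrt (\<epsilon> N)))"
    proof (intro exI[of _ "max N1 256"] allI impI ballI)
      fix N p x0 sel
      assume N: "max N1 256 \<le> N" and p: "p \<in> A N" and eq: "emp N x0 = p" and sel: "sel \<in> {True, False}"
      have e1: "\<epsilon> N \<le> 1" using N1 N by fastforce
      have N256: "256 \<le> N" using N by simp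
      have Bp: "B N p \<in> noise_F1 (M N) (Pts N) (noise_intensity N \<mu> q s)" "measure (M N) (B N p) \<le> \<epsilon> N"
        using Bh p by auto
      have pS: "emp N x0 \<in> Sbar N" using Asub p eq by auto
      note m = main_N[OF assms q0 q1 s0 Pois[rule_format, of N] N256 pS Bp e1, of sel]
      show "(\<integral>\<^sup>+\<omega>. ennreal (- (INF t\<in>{0..1}. Min ((\<lambda>i. moran_path sel (Pts N \<omega>) x0 t i - x0 i) ` {..<N}))
                         * indicator (B N p) \<omega>) \<partial>M N)
            \<le> ennreal (?C * (sqrt (c2 p * real N ^ 3) + real N ^ 2) * sqrt (\<epsilon> N)) \<and>
          (\<integral>\<^sup>+\<omega>. ennreal (- (INF t\<in>{0..1}. kc (emp N (moran_path sel (Pts N \<omega>) x0 t)) - kc p)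
                         * indicator (B N p) \<omega>) \<partial>M N)
            \<le> ennreal (?C * (sqrt (c2 p * real N ^ 3) + real N ^ 2) * sqrt (\<epsilon> N))"
        using m unfolding eq .
    qed
  qed
qed


end
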